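(* Typechecking of $\beta$-normal terms in System $\mathsf{F_{<:}^\top}$ is decidable: there is an algorithm which, given a $\beta$-normal $\mathsf{F_{<:}^\top}$ term-in-context $\Theta\vdash^\top t$ and an $\mathsf{F_{<:}^\top}$ type $\Theta\vdash^\top T$, decides whether $\Theta\vdash^\top t:T$ is derivable in System $\mathsf{F_{<:}^\top}$.
   Context: System $\mathsf{F_{<:}^\top}$: raw types $T ::= \top \mid X \mid T\to T \mid \forall(X<:T).T$, up to $\alpha$-conversion. Contexts $\Theta$: finite sequences of $X<:T$ or $x:T$ with distinct variables, each type well-formed over the preceding part. Subtyping $\Theta\vdash^\top S<:T$: (Var) $\Theta,X<:T,\Theta'\vdash X<:T$; (Top) $T<:\top$; (Refl) $T<:T$; (Trans) from $T<:T'$, $T'<:T''$ infer $T<:T''$; ($\to$) from $\Theta\vdash S'<:S$, $\Theta\vdash T<:T'$ infer $\Theta\vdash S\to T<:S'\to T'$; ($\forall$-Top) from $\Theta\vdash T_0<:S_0$ and $\Theta,X<:\top\vdash S_1<:T_1$ infer $\Theta\vdash\forall(X<:S_0).S_1<:\forall(X<:T_0).T_1$. Raw terms $t ::= \mathsf{top}\mid x\mid\lambda(x:T).t\mid\Lambda(X<:T).t\mid t\,t\mid t\{T\}$. Typing $\Theta\vdash^\top t:T$: $\Theta\vdash\mathsf{top}:\top$; $\Theta,x:T,\Theta'\vdash x:T$; (sub) from $t:T$ and $T<:T'$ infer $t:T'$; from $\Theta,x:S\vdash t:T$ infer $\Theta\vdash\lambda(x:S).t:S\to T$; from $t:S\to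 T$ and $s:S$ infer $t\,s:T$; from $\Theta,X<:S\vdash t:T$ infer $\Theta\vdash\Lambda(X<:S).t:\forall(X<:S).T$; from $\Theta\vdash t:\forall(X<:S).T$ and $\Theta\vdash S'<:S$ infer $\Theta\vdash t\{S'\}:T[S'/X]$. A term is $\beta$-normal if it has no subterm of the form $(\lambda(x:S).t)\,s$ or $(\Lambda(X<:S).t)\{R\}$. *)

theory Defs
  imports Main "HOL-Library.Nat_Bijection"
begin

text \<open>Uniform de Bruijn indices over contexts: index i refers to the i-th binding
  of the context counted from the most recent one (the head of the list).
  Type variables and term variables share one index space (as in the standard
  POPLmark de Bruijn mechanisation).\<close>

datatype ty = Top | TVar nat | Arr ty ty | All ty ty
  \<comment> \<open>All S T  is  forall (X <: S). T  with X bound as index 0 in T\<close>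

datatype trm = TopT | Var nat | Abs ty trm | TAbs ty trm | App trm trm | TApp trm ty

datatype binding = VarB ty | TVarB ty
  \<comment> \<open>VarB T is  x : T,  TVarB T is  X <: T\<close>

type_synonym env = "binding list"

primrec liftT :: "nat \<Rightarrow> nat \<Rightarrow> ty \<Rightarrow> ty" where
  "liftT n k Top = Top"
| "liftT n k (TVar i) = (if i < k then TVar i else TVar (i + n))"
| "liftT n k (Arr S T) = Arr (liftT n k S) (liftT n k T)"
| "liftT n k (All S T) = All (liftT n k S) (liftT n (Suc k) T)"

text \<open>substT T k U: replace index k by U (U lives in the context below position k),
  decrementing the indices above k.\<close>
primrec substT :: "ty \<Rightarrow> nat \<Rightarrow> ty \<Rightarrow> ty" where
  "substT Top k U = Top"
| "substT (TVar i) k U = (if k < i then TVar (i - 1) else if i = k then liftT k 0 U else TVar i)"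
| "substT (Arr S T) k U = Arr (substT S k U) (substT T k U)"
| "substT (All S T) k U = All (substT S k U) (substT T (Suc k) U)"

fun is_TVarB :: "binding \<Rightarrow> bool" where
  "is_TVarB (TVarB _) = True" | "is_TVarB (VarB _) = False"

fun is_VarB :: "binding \<Rightarrow> bool" where
  "is_VarB (VarB _) = True" | "is_VarB (TVarB _) = False"

fun bty :: "binding \<Rightarrow> ty" where
  "bty (VarB T) = T" | "bty (TVarB T) = T"

primrec wfT :: "env \<Rightarrow> ty \<Rightarrow> bool" where
  "wfT \<Gamma> Top = True"
| "wfT \<Gamma> (TVar i) = (i < length \<Gamma> \<and> is_TVarB (\<Gamma> ! i))"
| "wfT \<Gamma> (Arr S T) = (wfT \<Gamma> S \<and> wfT \<Gamma> T)"
| "wfT \<Gamma> (All S T) = (wfT \<Gamma> S \<and> wfT (TVarB S # \<Gamma>) T)"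

primrec wfE :: "env \<Rightarrow> bool" where
  "wfE [] = True"
| "wfE (B # \<Gamma>) = (wfE \<Gamma> \<and> wfT \<Gamma> (bty B))"

primrec wf_trm :: "env \<Rightarrow> trm \<Rightarrow> bool" where
  "wf_trm \<Gamma> TopT = True"
| "wf_trm \<Gamma> (Var i) = (i < length \<Gamma> \<and> is_VarB (\<Gamma> ! i))"
| "wf_trm \<Gamma> (Abs S t) = (wfT \<Gamma> S \<and> wf_trm (VarB S # \<Gamma>) t)"
| "wf_trm \<Gamma> (TAbs S t) = (wfT \<Gamma> S \<and> wf_trm (TVarB S # \<Gamma>) t)"
| "wf_trm \<Gamma> (App s t) = (wf_trm \<Gamma> s \<and> wf_trm \<Gamma> t)"
| "wf_trm \<Gamma> (TApp t S) = (wf_trm \<Gamma> t \<and> wfT \<Gamma> S)"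

inductive subtype :: "env \<Rightarrow> ty \<Rightarrow> ty \<Rightarrow> bool" ("_ \<turnstile>\<^sub>s _ <: _" [50, 50, 50] 50) where
  SA_Var: "wfE \<Gamma> \<Longrightarrow> i < length \<Gamma> \<Longrightarrow> \<Gamma> ! i = TVarB U \<Longrightarrow> \<Gamma> \<turnstile>\<^sub>s TVar i <: liftT (Suc i) 0 U"
| SA_Top: "wfE \<Gamma> \<Longrightarrow> wfT \<Gamma> S \<Longrightarrow> \<Gamma> \<turnstile>\<^sub>s S <: Top"
| SA_Refl: "wfE \<Gamma> \<Longrightarrow> wfT \<Gamma> S \<Longrightarrow> \<Gamma> \<turnstile>\<^sub>s S <: S"
| SA_Trans: "\<Gamma> \<turnstile>\<^sub>s S <: T \<Longrightarrow> \<Gamma> \<turnstile>\<^sub>s T <: U \<Longrightarrow> \<Gamma> \<turnstile>\<^sub>s S <: U"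
| SA_Arr: "\<Gamma> \<turnstile>\<^sub>s S' <: S \<Longrightarrow> \<Gamma> \<turnstile>\<^sub>s T <: T' \<Longrightarrow> \<Gamma> \<turnstile>\<^sub>s Arr S T <: Arr S' T'"
| SA_All_Top: "\<Gamma> \<turnstile>\<^sub>s T0 <: S0 \<Longrightarrow> TVarB Top # \<Gamma> \<turnstile>\<^sub>s S1 <: T1 \<Longrightarrow>
      \<Gamma> \<turnstile>\<^sub>s All S0 S1 <: All T0 T1"

inductive typing :: "env \<Rightarrow> trm \<Rightarrow> ty \<Rightarrow> bool" ("_ \<turnstile>\<^sub>t _ : _" [50, 50, 50] 50) where
  T_Top: "wfE \<Gamma> \<Longrightarrow> \<Gamma> \<turnstile>\<^sub>t TopT : Top"
| T_Var: "wfE \<Gamma> \<Longrightarrow> i < length \<Gamma> \<Longrightarrow> \<Gamma> ! i = VarB U \<Longrightarrow> \<Gamma> \<turnstile>\<^sub>t Var i : liftT (Suc i) 0 U"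
| T_Sub: "\<Gamma> \<turnstile>\<^sub>t t : T \<Longrightarrow> \<Gamma> \<turnstile>\<^sub>s T <: T' \<Longrightarrow> \<Gamma> \<turnstile>\<^sub>t t : T'"
| T_Abs: "VarB S # \<Gamma> \<turnstile>\<^sub>t t : T \<Longrightarrow> \<Gamma> \<turnstile>\<^sub>t Abs S t : Arr S (substT T 0 Top)"
    \<comment> \<open>substT T 0 Top just removes the (term-variable) binder index 0 from T\<close>
| T_App: "\<Gamma> \<turnstile>\<^sub>t s : Arr S T \<Longrightarrow> \<Gamma> \<turnstile>\<^sub>t t : S \<Longrightarrow> \<Gamma> \<turnstile>\<^sub>t App s t : T"
| T_TAbs: "TVarB S # \<Gamma> \<turnstile>\<^sub>t t : T \<Longrightarrow> \<Gamma> \<turnstile>\<^sub>t TAbs S t : All S T"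
| T_TApp: "\<Gamma> \<turnstile>\<^sub>t t : All S T \<Longrightarrow> \<Gamma> \<turnstile>\<^sub>s S' <: S \<Longrightarrow> \<Gamma> \<turnstile>\<^sub>t TApp t S' : substT T 0 S'"

primrec beta_normal :: "trm \<Rightarrow> bool" where
  "beta_normal TopT = True"
| "beta_normal (Var i) = True"
| "beta_normal (Abs S t) = beta_normal t"
| "beta_normal (TAbs S t) = beta_normal t"
| "beta_normal (App s t) = ((\<forall>S u. s \<noteq> Abs S u) \<and> beta_normal s \<and> beta_normal t)"
| "beta_normal (TApp t S) = ((\<forall>R u. t \<noteq> TAbs R u) \<and> beta_normal t)"

datatype recf = Z | Sc | Id nat | Cn recf "recf list" | Pr recf recf | Mn recf

inductive rec_eval :: "recf \<Rightarrow> nat list \<Rightarrow> nat \<Rightarrow> bool" where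
  ev_Z: "rec_eval Z xs 0"
| ev_S: "rec_eval Sc (x # xs) (Suc x)"
| ev_Id: "i < length xs \<Longrightarrow> rec_eval (Id i) xs (xs ! i)"
| ev_Cn: "list_all2 (\<lambda>g y. rec_eval g xs y) gs ys \<Longrightarrow> rec_eval f ys r \<Longrightarrow> rec_eval (Cn f gs) xs r"
| ev_Pr0: "rec_eval f xs r \<Longrightarrow> rec_eval (Pr f g) (0 # xs) r"
| ev_PrS: "rec_eval (Pr f g) (n # xs) r \<Longrightarrow> rec_eval g (n # r # xs) r' \<Longrightarrow>
      rec_eval (Pr f g) (Suc n # xs) r'"
| ev_Mn: "rec_eval f (n # xs) 0 \<Longrightarrow> (\<forall>m<n. \<exists>r. rec_eval f (m # xs) r \<and> 0 < r) \<Longrightarrow>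
      rec_eval (Mn f) xs n"

primrec enc_ty :: "ty \<Rightarrow> nat" where
  "enc_ty Top = prod_encode (0, 0)"
| "enc_ty (TVar i) = prod_encode (1, i)"
| "enc_ty (Arr S T) = prod_encode (2, prod_encode (enc_ty S, enc_ty T))"
| "enc_ty (All S T) = prod_encode (3, prod_encode (enc_ty S, enc_ty T))"

primrec enc_trm :: "trm \<Rightarrow> nat" where
  "enc_trm TopT = prod_encode (0, 0)"
| "enc_trm (Var i) = prod_encode (1, i)"
| "enc_trm (Abs S t) = prod_encode (2, prod_encode (enc_ty S, enc_trm t))"
| "enc_trm (TAbs S t) = prod_encode (3, prod_encode (enc_ty S, enc_trm t))"
| "enc_trm (App s t) = prod_encode (4, prod_encode (enc_trm s, enc_trm t))"
| "enc_trm (TApp t S) = prod_encode (5, prod_encode (enc_trm t, enc_ty S))"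

fun enc_binding :: "binding \<Rightarrow> nat" where
  "enc_binding (VarB T) = prod_encode (0, enc_ty T)"
| "enc_binding (TVarB T) = prod_encode (1, enc_ty T)"

definition enc_env :: "env \<Rightarrow> nat" where
  "enc_env \<Gamma> = list_encode (map enc_binding \<Gamma>)"

definition enc_input :: "env \<Rightarrow> trm \<Rightarrow> ty \<Rightarrow> nat" where
  "enc_input \<Gamma> t T = prod_encode (enc_env \<Gamma>, prod_encode (enc_trm t, enc_ty T))"

end

theory Submission
  imports Defs
begin


definition pe :: "nat \<Rightarrow> nat \<Rightarrow> nat" where "pe a b = prod_encode (a, b)"
definition p1 :: "nat \<Rightarrow> nat" where "p1 n = fst (prod_decode n)"
definition p2 :: "nat \<Rightarrow> nat" where "p2 n = snd (prod_decode n)"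

lemma p1_pe[simp]: "p1 (pe a b) = a" by (simp add: p1_def pe_def)
lemma p2_pe[simp]: "p2 (pe a b) = b" by (simp add: p2_def pe_def)
lemma pe_p[simp]: "pe (p1 n) (p2 n) = n" by (simp add: p1_def p2_def pe_def)
lemma pe_eq[simp]: "pe a b = pe c d \<longleftrightarrow> a = c \<and> b = d" by (simp add: pe_def)
lemma pe_ge1: "a \<le> pe a b" by (simp add: pe_def le_prod_encode_1)
lemma pe_ge2: "b \<le> pe a b" by (simp add: pe_def le_prod_encode_2)
lemma pe_alt: "pe a b = triangle (a + b) + a" by (simp add: pe_def prod_encode_def)

definition cmp :: "(nat \<Rightarrow> bool) \<Rightarrow> (nat \<Rightarrow> nat) \<Rightarrow> bool" where
  "cmp P f \<longleftrightarrow> (\<exists>r. \<forall>x. P x \<longrightarrow> rec_eval r [x] (f x))"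
definition bin :: "(nat \<Rightarrow> nat \<Rightarrow> nat) \<Rightarrow> bool" where
  "bin F \<longleftrightarrow> (\<exists>r. \<forall>a b. rec_eval r [a, b] (F a b))"

lemma Pr_eval:
  assumes "rec_eval f xs (H 0)" "\<And>m. rec_eval g (m # H m # xs) (H (Suc m))"
  shows "rec_eval (Pr f g) (n # xs) (H n)"
  by (induct n) (auto intro: rec_eval.intros assms)

lemma Cn1: "rec_eval g xs y \<Longrightarrow> rec_eval f [y] r \<Longrightarrow> rec_eval (Cn f [g]) xs r"
  by (rule ev_Cn[where ys="[y]"]) auto
lemma Cn2: "rec_eval g1 xs y1 \<Longrightarrow> rec_eval g2 xs y2 \<Longrightarrow> rec_eval f [y1, y2] r \<Longrightarrow> rec_eval (Cn f [g1, g2]) xs r"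
  by (rule ev_Cn[where ys="[y1, y2]"]) auto
lemma Id0: "rec_eval (Id 0) (x # xs) x" using ev_Id[of 0 "x # xs"] by simp
lemma Id1: "rec_eval (Id 1) (x # y # xs) y" using ev_Id[of 1 "x # y # xs"] by simp
lemma Id2: "rec_eval (Id 2) (x # y # z # xs) z" using ev_Id[of 2 "x # y # z # xs"] by (simp add: numeral_2_eq_2)

lemma Id1': "rec_eval (Id (Suc 0)) (x # y # xs) y" using Id1 by simp
lemma Id2': "rec_eval (Id (Suc (Suc 0))) (x # y # z # xs) z" using Id2 by (simp add: numeral_2_eq_2)
lemmas ev_basic = Id0 Id1 Id2 Id1' Id2' ev_Z ev_S

definition "ADDr = Pr (Id 0) (Cn Sc [Id 1])"
lemma ADDr: "rec_eval ADDr [n, x] (n + x)"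
  unfolding ADDr_def by (rule Pr_eval[where H="\<lambda>m. m + x"]) (auto intro: ev_basic Cn1)

definition "PREDr = Pr Z (Id 0)"
lemma PREDr: "rec_eval PREDr [n, x] (n - 1)"
  unfolding PREDr_def by (rule Pr_eval[where H="\<lambda>m. m - 1"]) (auto intro: ev_basic)

lemma ev_eq: "rec_eval r xs y \<Longrightarrow> y = z \<Longrightarrow> rec_eval r xs z" by simp

definition "MONr0 = Pr (Id 0) (Cn PREDr [Id 1, Id 1])"
lemma MONr0: "rec_eval MONr0 [y, x] (x - y)"
  unfolding MONr0_def
proof (rule Pr_eval[where H="\<lambda>m. x - m"])
  show "rec_eval (Id 0) [x] (x - 0)" using Id0 by simp
  fix m show "rec_eval (Cn PREDr [Id 1, Id 1]) [m, x - m, x] (x - Suc m)"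
    by (rule ev_eq[OF Cn2[OF Id1 Id1 PREDr]]) simp
qed

definition "MONr = Cn MONr0 [Id 1, Id 0]"
lemma MONr: "rec_eval MONr [x, y] (x - y)"
  unfolding MONr_def by (rule Cn2[OF Id1 Id0 MONr0])

definition "MULr = Pr Z (Cn ADDr [Id 1, Id 2])"
lemma MULr: "rec_eval MULr [n, x] (n * x)"
  unfolding MULr_def
proof (rule Pr_eval[where H="\<lambda>m. m * x"])
  show "rec_eval Z [x] (0 * x)" using ev_Z by simp
  fix m show "rec_eval (Cn ADDr [Id 1, Id 2]) [m, m * x, x] (Suc m * x)"
    by (rule ev_eq[OF Cn2[OF Id1 Id2 ADDr]]) simp
qed

definition "TRIr = Pr Z (Cn ADDr [Id 1, Cn Sc [Id 0]])"
lemma TRIr: "rec_eval TRIr [n, x] (triangle n)"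
  unfolding TRIr_def
proof (rule Pr_eval[where H="\<lambda>m. triangle m"])
  show "rec_eval Z [x] (triangle 0)" using ev_Z by simp
  fix m show "rec_eval (Cn ADDr [Id 1, Cn Sc [Id 0]]) [m, triangle m, x] (triangle (Suc m))"
    by (rule ev_eq[OF Cn2[OF Id1 Cn1[OF Id0 ev_S] ADDr]]) simp
qed

definition "PEr = Cn ADDr [Cn TRIr [Cn ADDr [Id 0, Id 1], Id 0], Id 0]"
lemma PEr: "rec_eval PEr [a, b] (pe a b)"
  unfolding PEr_def pe_alt by (rule Cn2[OF Cn2[OF Cn2[OF Id0 Id1 ADDr] Id0 TRIr] Id0 ADDr])

lemma bin_add: "bin (+)" unfolding bin_def using ADDr by blast
lemma bin_sub: "bin (-)" unfolding bin_def using MONr by blast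
lemma bin_mul: "bin (*)" unfolding bin_def using MULr by blast
lemma bin_pe: "bin pe" unfolding bin_def using PEr by blast

lemma cmp_bin: "bin F \<Longrightarrow> cmp P a \<Longrightarrow> cmp P b \<Longrightarrow> cmp P (\<lambda>x. F (a x) (b x))"
proof -
  assume "bin F" "cmp P a" "cmp P b"
  then obtain r ra rb where "\<And>a b. rec_eval r [a, b] (F a b)" "\<And>x. P x \<Longrightarrow> rec_eval ra [x] (a x)"
    "\<And>x. P x \<Longrightarrow> rec_eval rb [x] (b x)" unfolding bin_def cmp_def by blast
  then show ?thesis unfolding cmp_def by (intro exI[of _ "Cn r [ra, rb]"]) (blast intro: Cn2)
qed

lemma cmp_add[intro]: "cmp P a \<Longrightarrow> cmp P b \<Longrightarrow> cmp P (\<lambda>x. a x + b x)" by (rule cmp_bin[OF bin_add])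
lemma cmp_sub[intro]: "cmp P a \<Longrightarrow> cmp P b \<Longrightarrow> cmp P (\<lambda>x. a x - b x)" by (rule cmp_bin[OF bin_sub])
lemma cmp_mul[intro]: "cmp P a \<Longrightarrow> cmp P b \<Longrightarrow> cmp P (\<lambda>x. a x * b x)" by (rule cmp_bin[OF bin_mul])
lemma cmp_pe[intro]: "cmp P a \<Longrightarrow> cmp P b \<Longrightarrow> cmp P (\<lambda>x. pe (a x) (b x))" by (rule cmp_bin[OF bin_pe])

lemma cmp_id[intro]: "cmp P (\<lambda>x. x)" unfolding cmp_def using Id0 by blast
lemma cmp_const[intro]: "cmp P (\<lambda>x. c)"
proof (induct c)
  case 0 then show ?case unfolding cmp_def using ev_Z by blast
next
  case (Suc c) then obtain r where "\<And>x. P x \<Longrightarrow> rec_eval r [x] c" unfolding cmp_def by blast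
  then show ?case unfolding cmp_def by (intro exI[of _ "Cn Sc [r]"]) (blast intro: Cn1 ev_S)
qed
lemma cmp_Suc[intro]: "cmp P a \<Longrightarrow> cmp P (\<lambda>x. Suc (a x))"
  unfolding cmp_def by (blast intro: Cn1 ev_S)

lemma cmp_comp: "cmp Q F \<Longrightarrow> cmp P a \<Longrightarrow> (\<And>x. P x \<Longrightarrow> Q (a x)) \<Longrightarrow> cmp P (\<lambda>x. F (a x))"
proof -
  assume "cmp Q F" "cmp P a" and q: "\<And>x. P x \<Longrightarrow> Q (a x)"
  then obtain r ra where "\<And>x. Q x \<Longrightarrow> rec_eval r [x] (F x)" "\<And>x. P x \<Longrightarrow> rec_eval ra [x] (a x)"
    unfolding cmp_def by blast
  then show ?thesis unfolding cmp_def using q by (intro exI[of _ "Cn r [ra]"]) (blast intro: Cn1)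
qed

lemma cmp_weaken: "cmp Q F \<Longrightarrow> (\<And>x. P x \<Longrightarrow> Q x) \<Longrightarrow> cmp P F"
  unfolding cmp_def by blast

lemma cmp_cong: "cmp P F \<Longrightarrow> (\<And>x. P x \<Longrightarrow> F x = G x) \<Longrightarrow> cmp P G"
  unfolding cmp_def by metis

definition SS :: "nat \<Rightarrow> nat" where "SS p = (LEAST s. p < triangle (Suc s))"

lemma tri_ge: "n \<le> triangle n" by (induct n) auto

lemma SS_props: "triangle (SS p) \<le> p \<and> p < triangle (SS p) + Suc (SS p)"
proof -
  have ex: "p < triangle (Suc p)" using tri_ge[of p] by simp
  have 1: "p < triangle (Suc (SS p))" unfolding SS_def by (rule LeastI[of _ p]) (rule ex)
  have 2: "triangle (SS p) \<le> p"
  proof (cases "SS p")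
    case 0 then show ?thesis by simp
  next
    case (Suc s)
    then have "s < SS p" by simp
    then have "\<not> p < triangle (Suc s)" unfolding SS_def by (rule not_less_Least)
    then show ?thesis using Suc by simp
  qed
  show ?thesis using 1 2 by simp
qed

lemma p12_SS: "p1 p = p - triangle (SS p) \<and> p2 p = SS p - (p - triangle (SS p))"
proof -
  define a where "a = p - triangle (SS p)"
  have a: "a \<le> SS p" "triangle (SS p) + a = p" using SS_props[of p] unfolding a_def by auto
  have "pe a (SS p - a) = p" unfolding pe_alt using a by simp
  then have "p1 p = a \<and> p2 p = SS p - a" by (metis p1_pe p2_pe)
  then show ?thesis unfolding a_def by simp
qed

definition "SSf = Cn MONr [Cn Sc [Id 1], Cn TRIr [Cn Sc [Id 0], Id 0]]"
definition "SSr = Mn SSf"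
lemma SSf: "rec_eval SSf [s, p] (Suc p - triangle (Suc s))"
  unfolding SSf_def by (rule Cn2[OF Cn1[OF Id1 ev_S] Cn2[OF Cn1[OF Id0 ev_S] Id0 TRIr] MONr])
lemma SSr: "rec_eval SSr [p] (SS p)"
  unfolding SSr_def
proof (rule ev_Mn)
  show "rec_eval SSf [SS p, p] 0" using SSf[of "SS p" p] SS_props[of p] by simp
  show "\<forall>m<SS p. \<exists>r. rec_eval SSf (m # [p]) r \<and> 0 < r"
  proof (intro allI impI exI conjI)
    fix m assume "m < SS p"
    then have "\<not> p < triangle (Suc m)" unfolding SS_def by (rule not_less_Least)
    then show "0 < Suc p - triangle (Suc m)" by simp
  qed (rule SSf)
qed

definition "P1r = Cn MONr [Id 0, Cn TRIr [SSr, Id 0]]"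
lemma P1r: "rec_eval P1r [p] (p1 p)"
  unfolding P1r_def p12_SS[THEN conjunct1] by (rule Cn2[OF Id0 Cn2[OF SSr Id0 TRIr] MONr])
definition "P2r = Cn MONr [SSr, P1r]"
lemma P2r: "rec_eval P2r [p] (p2 p)"
  unfolding P2r_def by (rule ev_eq[OF Cn2[OF SSr P1r MONr]]) (simp add: p12_SS)

lemma cmp_p1[intro]: "cmp P a \<Longrightarrow> cmp P (\<lambda>x. p1 (a x))"
  unfolding cmp_def by (blast intro: Cn1 P1r)
lemma cmp_p2[intro]: "cmp P a \<Longrightarrow> cmp P (\<lambda>x. p2 (a x))"
  unfolding cmp_def by (blast intro: Cn1 P2r)

lemma cmp_eq[intro]: "cmp P a \<Longrightarrow> cmp P b \<Longrightarrow> cmp P (\<lambda>x. of_bool (a x = b x))"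
  apply (rule cmp_cong[where F="\<lambda>x. 1 - ((a x - b x) + (b x - a x))"])
   apply (intro cmp_sub cmp_add cmp_mul cmp_const; assumption)
  by auto
lemma cmp_less[intro]: "cmp P a \<Longrightarrow> cmp P b \<Longrightarrow> cmp P (\<lambda>x. of_bool (a x < b x))"
  apply (rule cmp_cong[where F="\<lambda>x. 1 - (1 - (b x - a x))"])
   apply (intro cmp_sub cmp_add cmp_mul cmp_const; assumption)
  by auto
lemma cmp_le[intro]: "cmp P a \<Longrightarrow> cmp P b \<Longrightarrow> cmp P (\<lambda>x. of_bool (a x \<le> b x))"
  apply (rule cmp_cong[where F="\<lambda>x. 1 - (a x - b x)"])
   apply (intro cmp_sub cmp_add cmp_mul cmp_const; assumption)
  by auto
lemma cmp_conj[intro]: "cmp P (\<lambda>x. of_bool (A x)) \<Longrightarrow> cmp P (\<lambda>x. of_bool (B x)) \<Longrightarrow> cmp P (\<lambda>x. of_bool (A x \<and> B x))"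
  apply (rule cmp_cong[where F="\<lambda>x. of_bool (A x) * of_bool (B x)"])
   apply (intro cmp_sub cmp_add cmp_mul cmp_const; assumption)
  by auto
lemma cmp_not[intro]: "cmp P (\<lambda>x. of_bool (A x)) \<Longrightarrow> cmp P (\<lambda>x. of_bool (\<not> A x))"
  apply (rule cmp_cong[where F="\<lambda>x. 1 - of_bool (A x)"])
   apply (intro cmp_sub cmp_add cmp_mul cmp_const; assumption)
  by auto
lemma cmp_disj[intro]: "cmp P (\<lambda>x. of_bool (A x)) \<Longrightarrow> cmp P (\<lambda>x. of_bool (B x)) \<Longrightarrow> cmp P (\<lambda>x. of_bool (A x \<or> B x))"
  apply (rule cmp_cong[where F="\<lambda>x. 1 - (1 - of_bool (A x)) * (1 - of_bool (B x))"])
   apply (intro cmp_sub cmp_add cmp_mul cmp_const; assumption)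
  by auto

lemma lazy_Pr:
  assumes "k = 0 \<or> (k = 1 \<and> rec_eval ra [x] v)"
  shows "rec_eval (Pr Z (Cn ra [Id 2])) [k, x] (if k = 0 then 0 else v)"
  using assms
proof
  assume "k = 0" then show ?thesis by (simp add: ev_Pr0 ev_Z)
next
  assume k: "k = 1 \<and> rec_eval ra [x] v"
  have "rec_eval (Pr Z (Cn ra [Id 2])) [Suc 0, x] v"
    by (rule ev_PrS[where r=0]) (auto intro!: ev_Pr0 ev_Z Cn1 ev_basic k[THEN conjunct2])
  then show ?thesis using k by simp
qed

lemma cmp_if[intro]:
  assumes "cmp P (\<lambda>x. of_bool (c x))" "cmp (\<lambda>x. P x \<and> c x) a" "cmp (\<lambda>x. P x \<and> \<not> c x) b"
  shows "cmp P (\<lambda>x. if c x then a x else b x)"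
proof -
  obtain rc where rc: "\<And>x. P x \<Longrightarrow> rec_eval rc [x] (of_bool (c x))" using assms(1) unfolding cmp_def by blast
  obtain ra where ra: "\<And>x. P x \<and> c x \<Longrightarrow> rec_eval ra [x] (a x)" using assms(2) unfolding cmp_def by blast
  obtain rb where rb: "\<And>x. P x \<and> \<not> c x \<Longrightarrow> rec_eval rb [x] (b x)" using assms(3) unfolding cmp_def by blast
  define r where "r = Cn ADDr [Cn (Pr Z (Cn ra [Id 2])) [rc, Id 0], Cn (Pr Z (Cn rb [Id 2])) [Cn MONr [Cn Sc [Z], rc], Id 0]]"
  have "rec_eval r [x] (if c x then a x else b x)" if "P x" for x
  proof -
    have A: "rec_eval (Pr Z (Cn ra [Id 2])) [of_bool (c x), x] (if of_bool (c x) = (0::nat) then 0 else a x)"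
      by (rule lazy_Pr) (use ra that in auto)
    have B: "rec_eval (Pr Z (Cn rb [Id 2])) [1 - of_bool (c x), x] (if 1 - of_bool (c x) = (0::nat) then 0 else b x)"
      by (rule lazy_Pr) (use rb that in auto)
    have C: "rec_eval (Cn MONr [Cn Sc [Z], rc]) [x] (1 - of_bool (c x))"
      by (rule ev_eq[OF Cn2[OF Cn1[OF ev_Z ev_S] rc[OF that] MONr]]) simp
    have "rec_eval r [x] ((if of_bool (c x) = (0::nat) then 0 else a x) + (if 1 - of_bool (c x) = (0::nat) then 0 else b x))"
      unfolding r_def by (rule Cn2[OF Cn2[OF rc[OF that] Id0 A] Cn2[OF C Id0 B] ADDr])
    then show ?thesis by (cases "c x") auto
  qed
  then show ?thesis unfolding cmp_def by blast
qed

lemma cmp_iter: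
  assumes s: "cmp Q s" and cl: "\<And>y. Q y \<Longrightarrow> Q (s y)" and n: "cmp P nn" and z: "cmp P z"
    and zq: "\<And>x. P x \<Longrightarrow> Q (z x)"
  shows "cmp P (\<lambda>x. (s ^^ nn x) (z x))"
proof -
  obtain rs where rs: "\<And>y. Q y \<Longrightarrow> rec_eval rs [y] (s y)" using s unfolding cmp_def by blast
  obtain rn where rn: "\<And>x. P x \<Longrightarrow> rec_eval rn [x] (nn x)" using n unfolding cmp_def by blast
  obtain rz where rz: "\<And>x. P x \<Longrightarrow> rec_eval rz [x] (z x)" using z unfolding cmp_def by blast
  have Qi: "Q y \<Longrightarrow> Q ((s ^^ m) y)" for y m by (induct m) (auto intro: cl)
  have it: "Q y \<Longrightarrow> rec_eval (Pr (Id 0) (Cn rs [Id 1])) [m, y] ((s ^^ m) y)" for y m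
    by (rule Pr_eval[where H="\<lambda>m. (s ^^ m) y"]) (auto intro!: Id0 Cn1 Id1 Id1' rs Qi)
  show ?thesis unfolding cmp_def
  proof (intro exI allI impI)
    fix x assume "P x"
    show "rec_eval (Cn (Pr (Id 0) (Cn rs [Id 1])) [rn, rz]) [x] ((s ^^ nn x) (z x))"
      by (rule Cn2[OF rn[OF \<open>P x\<close>] rz[OF \<open>P x\<close>] it[OF zq[OF \<open>P x\<close>]]])
  qed
qed

lemma cmp_least:
  assumes g: "cmp Q g" and q: "\<And>x n. P x \<Longrightarrow> Q (pe n x)" and ex: "\<And>x. P x \<Longrightarrow> \<exists>n. g (pe n x) = 0"
  shows "cmp P (\<lambda>x. LEAST n. g (pe n x) = 0)"
proof -
  obtain rg where rg: "\<And>y. Q y \<Longrightarrow> rec_eval rg [y] (g y)" using g unfolding cmp_def by blast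
  have f: "P x \<Longrightarrow> rec_eval (Cn rg [PEr]) [n, x] (g (pe n x))" for n x
    by (rule Cn1[OF PEr rg[OF q]])
  have "P x \<Longrightarrow> rec_eval (Mn (Cn rg [PEr])) [x] (LEAST n. g (pe n x) = 0)" for x
  proof (rule ev_Mn)
    assume "P x"
    then obtain n where "g (pe n x) = 0" using ex by blast
    then have "g (pe (LEAST n. g (pe n x) = 0) x) = 0" by (rule LeastI)
    then show "rec_eval (Cn rg [PEr]) ((LEAST n. g (pe n x) = 0) # [x]) 0" using f[OF \<open>P x\<close>] by metis
    show "\<forall>m<(LEAST n. g (pe n x) = 0). \<exists>r. rec_eval (Cn rg [PEr]) (m # [x]) r \<and> 0 < r"
      using f[OF \<open>P x\<close>] not_less_Least by blast
  qed
  then show ?thesis unfolding cmp_def by blast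
qed


definition TOP :: "nat \<Rightarrow> nat" where "TOP s = p1 (p1 s - 1)"
definition REST :: "nat \<Rightarrow> nat" where "REST s = p2 (p1 s - 1)"
definition XX :: "nat \<Rightarrow> nat" where "XX s = p1 (TOP s)"
definition PH :: "nat \<Rightarrow> nat" where "PH s = p1 (p2 (TOP s))"
definition RR1 :: "nat \<Rightarrow> nat" where "RR1 s = p2 (p2 (TOP s))"
definition mkst :: "nat \<Rightarrow> nat \<Rightarrow> nat \<Rightarrow> nat \<Rightarrow> nat \<Rightarrow> nat" where
  "mkst x ph r rest ret = pe (Suc (pe (pe x (pe ph r)) rest)) ret"

lemma mkst_simps[simp]: "p1 (mkst x ph r rest ret) \<noteq> 0" "XX (mkst x ph r rest ret) = x"
  "PH (mkst x ph r rest ret) = ph" "RR1 (mkst x ph r rest ret) = r" "REST (mkst x ph r rest ret) = rest"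
  "p2 (mkst x ph r rest ret) = ret"
  by (simp_all add: mkst_def XX_def PH_def RR1_def REST_def TOP_def)

lemma cmp_TOP[intro]: "cmp P a \<Longrightarrow> cmp P (\<lambda>x. TOP (a x))" unfolding TOP_def by (intro cmp_p1 cmp_p2 cmp_sub cmp_const; assumption)
lemma cmp_REST[intro]: "cmp P a \<Longrightarrow> cmp P (\<lambda>x. REST (a x))" unfolding REST_def by (intro cmp_p1 cmp_p2 cmp_sub cmp_const cmp_TOP; assumption)
lemma cmp_XX[intro]: "cmp P a \<Longrightarrow> cmp P (\<lambda>x. XX (a x))" unfolding XX_def by (intro cmp_p1 cmp_p2 cmp_sub cmp_const cmp_TOP; assumption)
lemma cmp_PH[intro]: "cmp P a \<Longrightarrow> cmp P (\<lambda>x. PH (a x))" unfolding PH_def by (intro cmp_p1 cmp_p2 cmp_sub cmp_const cmp_TOP; assumption)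
lemma cmp_RR1[intro]: "cmp P a \<Longrightarrow> cmp P (\<lambda>x. RR1 (a x))" unfolding RR1_def by (intro cmp_p1 cmp_p2 cmp_sub cmp_const cmp_TOP; assumption)

locale scheme =
  fixes P :: "nat \<Rightarrow> bool" and f \<mu> :: "nat \<Rightarrow> nat" and d :: "nat \<Rightarrow> bool" and b c1 c2 h :: "nat \<Rightarrow> nat"
  assumes cd: "cmp P (\<lambda>x. of_bool (d x))"
  and cb: "cmp (\<lambda>x. P x \<and> d x) b"
  and cc1: "cmp (\<lambda>x. P x \<and> \<not> d x) c1"
  and cc2: "cmp (\<lambda>y. P (p1 y) \<and> \<not> d (p1 y) \<and> p2 y = f (c1 (p1 y))) c2"
  and ch: "cmp (\<lambda>y. P (p1 y) \<and> \<not> d (p1 y) \<and> p1 (p2 y) = f (c1 (p1 y)) \<and>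
             p2 (p2 y) = f (c2 (pe (p1 y) (p1 (p2 y))))) h"
  and fb: "\<And>x. P x \<Longrightarrow> d x \<Longrightarrow> f x = b x"
  and fr: "\<And>x. P x \<Longrightarrow> \<not> d x \<Longrightarrow> P (c1 x) \<and> \<mu> (c1 x) < \<mu> x \<and> P (c2 (pe x (f (c1 x)))) \<and>
             \<mu> (c2 (pe x (f (c1 x)))) < \<mu> x \<and> f x = h (pe x (pe (f (c1 x)) (f (c2 (pe x (f (c1 x)))))))"
begin

definition step :: "nat \<Rightarrow> nat" where
  "step s = (if p1 s = 0 then s else
     if PH s = 0 then (if d (XX s) then pe (REST s) (b (XX s))
                       else mkst (c1 (XX s)) 0 0 (Suc (pe (pe (XX s) (pe 1 0)) (REST s))) (p2 s))
     else if PH s = 1 then mkst (c2 (pe (XX s) (p2 s))) 0 0 (Suc (pe (pe (XX s) (pe 2 (p2 s))) (REST s))) (p2 s)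
     else pe (REST s) (h (pe (XX s) (pe (RR1 s) (p2 s)))))"

definition LC :: "nat \<Rightarrow> bool" where
  "LC s \<longleftrightarrow> p1 s = 0 \<or> (PH s = 0 \<and> P (XX s)) \<or>
     (PH s = 1 \<and> P (XX s) \<and> \<not> d (XX s) \<and> p2 s = f (c1 (XX s))) \<or>
     (PH s \<noteq> 0 \<and> PH s \<noteq> 1 \<and> P (XX s) \<and> \<not> d (XX s) \<and> RR1 s = f (c1 (XX s)) \<and> p2 s = f (c2 (pe (XX s) (RR1 s))))"

lemma cmp_step: "cmp LC step"
  unfolding step_def mkst_def
  apply (rule cmp_if)
    apply (intro cmp_eq cmp_p1 cmp_id cmp_const)
   apply (rule cmp_id)
  apply (rule cmp_if)
    apply (intro cmp_eq cmp_PH cmp_id cmp_const)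
   apply (rule cmp_if)
     apply (rule cmp_comp[OF cd]; (intro cmp_XX cmp_id)?) apply (auto simp: LC_def)[1]
    apply (intro cmp_pe cmp_REST cmp_id)
    apply (rule cmp_comp[OF cb]; (intro cmp_XX cmp_id)?) apply (auto simp: LC_def)[1]
   apply (intro cmp_pe cmp_Suc cmp_REST cmp_XX cmp_id cmp_const cmp_p2)
   apply (rule cmp_comp[OF cc1]; (intro cmp_XX cmp_id)?) apply (auto simp: LC_def)[1]
  apply (rule cmp_if)
    apply (intro cmp_eq cmp_PH cmp_id cmp_const)
   apply (intro cmp_pe cmp_Suc cmp_REST cmp_XX cmp_id cmp_const cmp_p2)
   apply (rule cmp_comp[OF cc2]; (intro cmp_pe cmp_XX cmp_id cmp_p2)?) apply (auto simp: LC_def)[1]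
  apply (intro cmp_pe cmp_REST cmp_id)
  apply (rule cmp_comp[OF ch]; (intro cmp_pe cmp_XX cmp_id cmp_p2 cmp_RR1)?) apply (auto simp: LC_def)[1]
  done

lemma seg:
  assumes A: "(step ^^ k1) s = s' \<and> (\<forall>j<k1. LC ((step ^^ j) s))"
    and B: "(step ^^ k2) s' = s'' \<and> (\<forall>j<k2. LC ((step ^^ j) s'))"
  shows "(step ^^ (k2 + k1)) s = s'' \<and> (\<forall>j<k2 + k1. LC ((step ^^ j) s))"
proof (intro conjI allI impI)
  have assms: "(step ^^ k1) s = s'" "\<forall>j<k1. LC ((step ^^ j) s)"
    "(step ^^ k2) s' = s''" "\<forall>j<k2. LC ((step ^^ j) s')" using A B by auto
  show "(step ^^ (k2 + k1)) s = s''" using assms by (simp add: funpow_add)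
  fix j assume j: "j < k2 + k1"
  show "LC ((step ^^ j) s)"
  proof (cases "j < k1")
    case True then show ?thesis using assms by blast
  next
    case False
    then have "(step ^^ j) s = (step ^^ (j - k1)) s'"
      using assms(1) by (metis funpow_add le_add_diff_inverse2 not_less o_apply)
    then show ?thesis using assms(4) j False by auto
  qed
qed

lemma run:
  "P x \<Longrightarrow> \<exists>k. (step ^^ k) (mkst x 0 0 rest ret) = pe rest (f x) \<and>
      (\<forall>j<k. LC ((step ^^ j) (mkst x 0 0 rest ret)))"
proof (induction "\<mu> x" arbitrary: x rest ret rule: less_induct)
  case less
  show ?case
  proof (cases "d x")
    case True
    have "(step ^^ 1) (mkst x 0 0 rest ret) = pe rest (f x)"
      using True fb[OF less.prems True] by (simp add: step_def)
    moreover have "\<forall>j<1. LC ((step ^^ j) (mkst x 0 0 rest ret))" using less.prems by (simp add: LC_def)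
    ultimately show ?thesis by blast
  next
    case False
    note F = fr[OF less.prems False]
    define r1 where "r1 = f (c1 x)"
    define x2 where "x2 = c2 (pe x r1)"
    have s1: "(step ^^ 1) (mkst x 0 0 rest ret) = mkst (c1 x) 0 0 (Suc (pe (pe x (pe 1 0)) rest)) ret"
      using False by (simp add: step_def)
    have l1: "\<forall>j<1. LC ((step ^^ j) (mkst x 0 0 rest ret))" using less.prems by (simp add: LC_def)
    obtain k1 where k1: "(step ^^ k1) (mkst (c1 x) 0 0 (Suc (pe (pe x (pe 1 0)) rest)) ret) = mkst x 1 0 rest r1"
      "\<forall>j<k1. LC ((step ^^ j) (mkst (c1 x) 0 0 (Suc (pe (pe x (pe 1 0)) rest)) ret))"
      using less.hyps[of "c1 x"] F unfolding r1_def mkst_def by blast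
    have s2: "(step ^^ 1) (mkst x 1 0 rest r1) = mkst x2 0 0 (Suc (pe (pe x (pe 2 r1)) rest)) r1"
      by (simp add: step_def x2_def)
    have l2: "\<forall>j<1. LC ((step ^^ j) (mkst x 1 0 rest r1))" using less.prems False by (simp add: LC_def r1_def)
    obtain k2 where k2: "(step ^^ k2) (mkst x2 0 0 (Suc (pe (pe x (pe 2 r1)) rest)) r1) = mkst x 2 r1 rest (f x2)"
      "\<forall>j<k2. LC ((step ^^ j) (mkst x2 0 0 (Suc (pe (pe x (pe 2 r1)) rest)) r1))"
      using less.hyps[of x2] F unfolding r1_def x2_def mkst_def by blast
    have s3: "(step ^^ 1) (mkst x 2 r1 rest (f x2)) = pe rest (f x)"
      using F by (simp add: step_def x2_def r1_def)
    have l3: "\<forall>j<1. LC ((step ^^ j) (mkst x 2 r1 rest (f x2)))" using less.prems False by (simp add: LC_def r1_def x2_def)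
    show ?thesis
      using seg[OF seg[OF seg[OF seg[OF conjI[OF s1 l1] conjI[OF k1]] conjI[OF s2 l2]] conjI[OF k2]] conjI[OF s3 l3]] by blast
  qed
qed

definition init :: "nat \<Rightarrow> nat" where "init x = mkst x 0 0 0 0"

lemma halted: "(step ^^ n) (pe 0 r) = pe 0 r"
  by (induct n) (auto simp: step_def)

definition QQ :: "nat \<Rightarrow> bool" where "QQ s \<longleftrightarrow> (\<exists>x0 n. P x0 \<and> s = (step ^^ n) (init x0))"

lemma QQ_LC: "QQ s \<Longrightarrow> LC s"
proof -
  assume "QQ s"
  then obtain x0 n where x0: "P x0" and s: "s = (step ^^ n) (init x0)" unfolding QQ_def by blast
  obtain k where k: "(step ^^ k) (init x0) = pe 0 (f x0)" "\<forall>j<k. LC ((step ^^ j) (init x0))"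
    using run[OF x0, of 0 0] unfolding init_def by blast
  show ?thesis
  proof (cases "n < k")
    case True then show ?thesis using k s by blast
  next
    case False
    then have "s = (step ^^ (n - k)) ((step ^^ k) (init x0))" using s
      by (metis funpow_add le_add_diff_inverse2 not_less o_apply)
    then show ?thesis using k halted by (simp add: LC_def)
  qed
qed

lemma QQ_init: "P x \<Longrightarrow> QQ (init x)"
  unfolding QQ_def by (rule exI[of _ x], rule exI[of _ 0]) simp

lemma cmp_init: "cmp Q (\<lambda>y. init (a y))" if "cmp Q a"
  unfolding init_def mkst_def by (intro cmp_pe cmp_Suc cmp_const that)

theorem computable: "cmp P f"
proof -
  have cs: "cmp QQ step" by (rule cmp_weaken[OF cmp_step QQ_LC])
  have cl: "QQ y \<Longrightarrow> QQ (step y)" for y unfolding QQ_def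
    by (metis funpow_Suc_right o_apply funpow_swap1)
  have it: "cmp (\<lambda>y. P (p2 y)) (\<lambda>y. (step ^^ p1 y) (init (p2 y)))"
    by (rule cmp_iter[OF cs cl]) (auto intro!: cmp_init cmp_p1 cmp_p2 cmp_id QQ_init)
  define N where "N x = (LEAST n. p1 ((step ^^ p1 (pe n x)) (init (p2 (pe n x)))) = 0)" for x
  have exk: "P x \<Longrightarrow> \<exists>k. (step ^^ k) (init x) = pe 0 (f x)" for x
    using run[of x 0 0] unfolding init_def by blast
  have cN: "cmp P N" unfolding N_def
  proof (rule cmp_least[OF cmp_p1[OF it]])
    fix x assume "P x"
    then obtain k where "(step ^^ k) (init x) = pe 0 (f x)" using exk by blast
    then show "\<exists>n. p1 ((step ^^ p1 (pe n x)) (init (p2 (pe n x)))) = 0" by (intro exI[of _ k]) simp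
  qed simp
  have "cmp P (\<lambda>x. p2 ((step ^^ N x) (init x)))"
    by (intro cmp_p2 cmp_iter[OF cs cl] cN) (auto intro!: cmp_init cmp_id QQ_init)
  moreover have "p2 ((step ^^ N x) (init x)) = f x" if Px: "P x" for x
  proof -
    obtain k where k: "(step ^^ k) (init x) = pe 0 (f x)" using exk[OF Px] by blast
    have Nk: "p1 ((step ^^ N x) (init x)) = 0"
      unfolding N_def using LeastI[of "\<lambda>n. p1 ((step ^^ p1 (pe n x)) (init (p2 (pe n x)))) = 0" k] k by simp
    have le: "N x \<le> k" unfolding N_def using k by (intro Least_le) simp
    have "(step ^^ k) (init x) = (step ^^ (k - N x)) ((step ^^ N x) (init x))"
      using le by (metis funpow_add le_add_diff_inverse2 o_apply)
    also have "(step ^^ N x) (init x) = pe 0 (p2 ((step ^^ N x) (init x)))" using Nk by (metis pe_p)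
    finally show ?thesis using k halted by (metis p2_pe)
  qed
  ultimately show ?thesis by (rule cmp_cong)
qed

end


lemma liftT_0[simp]: "liftT 0 k T = T"
  by (induct T arbitrary: k) auto

lemma lift_lift: "k' \<le> k \<Longrightarrow> k \<le> k' + n' \<Longrightarrow> liftT n k (liftT n' k' U) = liftT (n + n') k' U"
  by (induct U arbitrary: k k') auto

lemma subst_lift: "k \<le> j \<Longrightarrow> j < k + n \<Longrightarrow> substT (liftT n k U) j S = liftT (n - 1) k U"
  by (induct U arbitrary: k j) auto

lemma subst_lift1[simp]: "substT (liftT 1 k U) k S = U"
  using subst_lift[of k k 1 U S] by simp

lemma map_isT_len: "map is_TVarB \<Gamma> = map is_TVarB \<Gamma>' \<Longrightarrow> length \<Gamma> = length \<Gamma>'"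
  by (drule arg_cong[where f=length]) simp

lemma map_isT_nth: "map is_TVarB \<Gamma> = map is_TVarB \<Gamma>' \<Longrightarrow> i < length \<Gamma> \<Longrightarrow> is_TVarB (\<Gamma> ! i) = is_TVarB (\<Gamma>' ! i)"
proof -
  assume a: "map is_TVarB \<Gamma> = map is_TVarB \<Gamma>'" and i: "i < length \<Gamma>"
  have "map is_TVarB \<Gamma> ! i = map is_TVarB \<Gamma>' ! i" using a by simp
  then show ?thesis using i map_isT_len[OF a] by simp
qed

lemma subst_lift1'[simp]: "substT (liftT (Suc 0) k U) k S = U"
  using subst_lift[of k k 1 U S] by simp

lemma wfT_cong: "map is_TVarB \<Gamma> = map is_TVarB \<Gamma>' \<Longrightarrow> wfT \<Gamma> T = wfT \<Gamma>' T"
proof (induct T arbitrary: \<Gamma> \<Gamma>')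
  case (TVar i)
  have l: "length \<Gamma> = length \<Gamma>'" by (rule map_isT_len[OF TVar])
  show ?case
  proof (cases "i < length \<Gamma>")
    case True then show ?thesis using l map_isT_nth[OF TVar True] by (simp only: wfT.simps; simp)
  next
    case False then show ?thesis using l by (simp only: wfT.simps; simp)
  qed
next
  case (Arr S T)
  show ?case using Arr(1)[of \<Gamma> \<Gamma>', OF Arr(3)] Arr(2)[of \<Gamma> \<Gamma>', OF Arr(3)] by (simp only: wfT.simps)
next
  case (All S T)
  have "map is_TVarB (TVarB S # \<Gamma>) = map is_TVarB (TVarB S # \<Gamma>')" using All(3) by simp
  then show ?case using All(1)[of \<Gamma> \<Gamma>', OF All(3)] All(2)[of "TVarB S # \<Gamma>" "TVarB S # \<Gamma>'"] by (simp only: wfT.simps)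
qed auto

lemma wfT_lift: "wfT (G1 @ G2) T \<Longrightarrow> map is_TVarB G1' = map is_TVarB G1 \<Longrightarrow>
    wfT (G1' @ G3 @ G2) (liftT (length G3) (length G1) T)"
proof (induct T arbitrary: G1 G1')
  case (TVar i)
  have l: "length G1' = length G1" using map_isT_len[OF TVar(2)] .
  show ?case
  proof (cases "i < length G1")
    case True
    have "is_TVarB (G1 ! i)" using TVar(1) True by (simp add: nth_append)
    moreover have "is_TVarB (G1' ! i) = is_TVarB (G1 ! i)" using map_isT_nth[OF TVar(2)] True l by simp
    ultimately show ?thesis using True l by (simp add: nth_append)
  next
    case False
    have "i - length G1 < length G2 \<and> is_TVarB (G2 ! (i - length G1))" using TVar(1) False by (auto simp: nth_append)
    then show ?thesis using False l by (auto simp: nth_append)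
  qed
next
  case (Arr S T)
  have "wfT (G1 @ G2) S" "wfT (G1 @ G2) T" using Arr(3) by simp_all
  then show ?case using Arr(1)[OF _ Arr(4)] Arr(2)[OF _ Arr(4)] by simp
next
  case (All S T)
  have 1: "wfT (G1 @ G2) S" "wfT ((TVarB S # G1) @ G2) T" using All(3) by simp_all
  have 2: "map is_TVarB (TVarB (liftT (length G3) (length G1) S) # G1') = map is_TVarB (TVarB S # G1)"
    using All(4) by simp
  show ?case using All(1)[OF 1(1) All(4)] All(2)[OF 1(2) 2] by simp
qed simp

lemma wfT_lift0: "wfT G2 T \<Longrightarrow> wfT (G3 @ G2) (liftT (length G3) 0 T)"
  using wfT_lift[of "[]" G2 T "[]" G3] by simp

lemma wfT_subst: "wfT (G1 @ B # G2) T \<Longrightarrow> wfT G2 U \<Longrightarrow> map is_TVarB G1' = map is_TVarB G1 \<Longrightarrow>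
    wfT (G1' @ G2) (substT T (length G1) U)"
proof (induct T arbitrary: G1 G1')
  case (TVar i)
  have l: "length G1' = length G1" using map_isT_len[OF TVar(3)] .
  consider "i < length G1" | "i = length G1" | "i > length G1" by linarith
  then show ?case
  proof cases
    case 1 then show ?thesis using TVar l map_isT_nth[OF TVar(3), of i] by (simp add: nth_append)
  next
    case 2 then show ?thesis using TVar l wfT_lift0[of G2 U G1'] by simp
  next
    case 3
    then obtain j where j: "i = Suc (length G1 + j)" by (metis less_iff_Suc_add)
    then show ?thesis using TVar l by (simp add: nth_append)
  qed
next
  case (All S T)
  then show ?case using All(2)[of "TVarB S # G1" "TVarB (substT S (length G1) U) # G1'"] by simp
qed auto

lemma wfE_nth: "wfE \<Gamma> \<Longrightarrow> i < length \<Gamma> \<Longrightarrow> wfT (drop (Suc i) \<Gamma>) (bty (\<Gamma> ! i))"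
proof (induct \<Gamma> arbitrary: i)
  case (Cons B \<Gamma>)
  then show ?case by (cases i) auto
qed simp

lemma wf_lookup: "wfE \<Gamma> \<Longrightarrow> i < length \<Gamma> \<Longrightarrow> wfT \<Gamma> (liftT (Suc i) 0 (bty (\<Gamma> ! i)))"
  using wfT_lift0[OF wfE_nth, of \<Gamma> i "take (Suc i) \<Gamma>"] by simp

lemma lift_subst_Top: "wfT \<Gamma> T \<Longrightarrow> k < length \<Gamma> \<Longrightarrow> \<not> is_TVarB (\<Gamma> ! k) \<Longrightarrow> liftT 1 k (substT T k Top) = T"
proof (induct T arbitrary: \<Gamma> k)
  case (TVar i)
  then have "i \<noteq> k" by auto
  then show ?case by auto
next
  case (All S T)
  show ?case using All(1)[of \<Gamma> k] All(2)[of "TVarB S # \<Gamma>" "Suc k"] All(3-5) by simp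
qed auto

section \<open>Algorithmic subtyping\<close>

inductive asub :: "env \<Rightarrow> ty \<Rightarrow> ty \<Rightarrow> bool" where
  A_Top: "asub \<Gamma> S Top"
| A_Refl: "asub \<Gamma> (TVar i) (TVar i)"
| A_Var: "i < length \<Gamma> \<Longrightarrow> \<Gamma> ! i = TVarB U \<Longrightarrow> asub \<Gamma> (liftT (Suc i) 0 U) T \<Longrightarrow> asub \<Gamma> (TVar i) T"
| A_Arr: "asub \<Gamma> T1 S1 \<Longrightarrow> asub \<Gamma> S2 T2 \<Longrightarrow> asub \<Gamma> (Arr S1 S2) (Arr T1 T2)"
| A_All: "asub \<Gamma> T0 S0 \<Longrightarrow> asub (TVarB Top # \<Gamma>) S1 T1 \<Longrightarrow> asub \<Gamma> (All S0 S1) (All T0 T1)"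

lemma asub_refl: "asub \<Gamma> T T"
  by (induct T arbitrary: \<Gamma>) (auto intro: A_Top A_Refl A_Arr A_All)

lemma asub_TopE: "asub \<Gamma> Top T \<Longrightarrow> T = Top"
  by (cases rule: asub.cases) auto

lemma asub_ArrE: "asub \<Gamma> (Arr S1 S2) T \<Longrightarrow> T = Top \<or> (\<exists>T1 T2. T = Arr T1 T2 \<and> asub \<Gamma> T1 S1 \<and> asub \<Gamma> S2 T2)"
  by (cases rule: asub.cases) auto

lemma asub_AllE: "asub \<Gamma> (All S0 S1) T \<Longrightarrow> T = Top \<or> (\<exists>T0 T1. T = All T0 T1 \<and> asub \<Gamma> T0 S0 \<and> asub (TVarB Top # \<Gamma>) S1 T1)"
  by (cases rule: asub.cases) auto

lemma asub_VarE: "asub \<Gamma> (TVar i) T \<Longrightarrow> T = Top \<or> T = TVar i \<or>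
    (\<exists>U. i < length \<Gamma> \<and> \<Gamma> ! i = TVarB U \<and> asub \<Gamma> (liftT (Suc i) 0 U) T)"
  by (cases rule: asub.cases) auto

lemma asub_trans_aux:
  assumes IH: "\<And>Q' \<Gamma> S T. size Q' < size Q \<Longrightarrow> asub \<Gamma> S Q' \<Longrightarrow> asub \<Gamma> Q' T \<Longrightarrow> asub \<Gamma> S T"
  shows "asub \<Gamma> S Q0 \<Longrightarrow> Q0 = Q \<Longrightarrow> asub \<Gamma> Q T \<Longrightarrow> asub \<Gamma> S T"
proof (induction arbitrary: T rule: asub.induct)
  case (A_Top \<Gamma> S)
  have "asub \<Gamma> Top T" using A_Top.prems by simp
  then have "T = Top" by (rule asub_TopE)
  then show ?case by (simp add: asub.A_Top)
next
  case (A_Refl \<Gamma> i)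
  then show ?case by simp
next
  case (A_Var i \<Gamma> U T')
  show ?case by (rule asub.A_Var[OF A_Var.hyps(1,2) A_Var.IH[OF A_Var.prems]])
next
  case (A_Arr \<Gamma> T1 S1 S2 T2)
  have q: "Q = Arr T1 T2" using A_Arr.prems(1) by simp
  have "asub \<Gamma> (Arr T1 T2) T" using A_Arr.prems(2) q by simp
  from asub_ArrE[OF this] show ?case
  proof (elim disjE exE conjE)
    assume "T = Top" then show ?thesis by (simp add: asub.A_Top)
  next
    fix T1' T2' assume T: "T = Arr T1' T2'" "asub \<Gamma> T1' T1" "asub \<Gamma> T2 T2'"
    have "asub \<Gamma> T1' S1" by (rule IH[OF _ T(2) A_Arr.hyps(1)]) (simp add: q)
    moreover have "asub \<Gamma> S2 T2'" by (rule IH[OF _ A_Arr.hyps(2) T(3)]) (simp add: q)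
    ultimately show ?thesis using T(1) by (simp add: asub.A_Arr)
  qed
next
  case (A_All \<Gamma> T0 S0 S1 T1)
  have q: "Q = All T0 T1" using A_All.prems(1) by simp
  have "asub \<Gamma> (All T0 T1) T" using A_All.prems(2) q by simp
  from asub_AllE[OF this] show ?case
  proof (elim disjE exE conjE)
    assume "T = Top" then show ?thesis by (simp add: asub.A_Top)
  next
    fix T0' T1' assume T: "T = All T0' T1'" "asub \<Gamma> T0' T0" "asub (TVarB Top # \<Gamma>) T1 T1'"
    have "asub \<Gamma> T0' S0" by (rule IH[OF _ T(2) A_All.hyps(1)]) (simp add: q)
    moreover have "asub (TVarB Top # \<Gamma>) S1 T1'" by (rule IH[OF _ A_All.hyps(2) T(3)]) (simp add: q)
    ultimately show ?thesis using T(1) by (simp add: asub.A_All)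
  qed
qed

lemma asub_trans: "asub \<Gamma> S Q \<Longrightarrow> asub \<Gamma> Q T \<Longrightarrow> asub \<Gamma> S T"
proof (induction "size Q" arbitrary: \<Gamma> S Q T rule: less_induct)
  case less
  show ?case by (rule asub_trans_aux[OF less.hyps less.prems(1) refl less.prems(2)]) auto
qed

lemma asub_weak:
  "asub G A B \<Longrightarrow> G = replicate m (TVarB Top) @ \<Gamma> \<Longrightarrow>
     asub (replicate m (TVarB Top) @ X # \<Gamma>) (liftT 1 m A) (liftT 1 m B)"
proof (induction arbitrary: m rule: asub.induct)
  case (A_Top G S)
  show ?case by (simp add: asub.A_Top)
next
  case (A_Refl G i)
  show ?case by (rule asub_refl)
next
  case (A_Var i G U T)
  have IH: "asub (replicate m (TVarB Top) @ X # \<Gamma>) (liftT 1 m (liftT (Suc i) 0 U)) (liftT 1 m T)"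
    by (rule A_Var.IH[OF A_Var.prems])
  have G: "G = replicate m (TVarB Top) @ \<Gamma>" by (rule A_Var.prems)
  show ?case
  proof (cases "i < m")
    case True
    then have U: "U = Top" using A_Var.hyps(2) G by (simp add: nth_append)
    have len: "i < length (replicate m (TVarB Top) @ X # \<Gamma>)" using True by simp
    have nth: "(replicate m (TVarB Top) @ X # \<Gamma>) ! i = TVarB Top" using True by (simp add: nth_append)
    have body: "asub (replicate m (TVarB Top) @ X # \<Gamma>) (liftT (Suc i) 0 Top) (liftT 1 m T)" using IH U by simp
    show ?thesis using asub.A_Var[OF len nth body] True by simp
  next
    case False
    have e: "liftT 1 m (liftT (Suc i) 0 U) = liftT (Suc (Suc i)) 0 U" using False by (simp add: lift_lift)
    have len: "Suc i < length (replicate m (TVarB Top) @ X # \<Gamma>)" using A_Var.hyps(1) G by simp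
    have nth: "(replicate m (TVarB Top) @ X # \<Gamma>) ! Suc i = TVarB U"
      using A_Var.hyps(2) G False by (simp add: nth_append Suc_diff_le)
    show ?thesis using asub.A_Var[OF len nth] IH e False by simp
  qed
next
  case (A_Arr G T1 S1 S2 T2)
  show ?case using asub.A_Arr[OF A_Arr.IH(1)[OF A_Arr.prems] A_Arr.IH(2)[OF A_Arr.prems]] by simp
next
  case (A_All G T0 S0 S1 T1)
  have 1: "asub (replicate m (TVarB Top) @ X # \<Gamma>) (liftT 1 m T0) (liftT 1 m S0)" by (rule A_All.IH(1)[OF A_All.prems])
  have 2: "asub (TVarB Top # replicate m (TVarB Top) @ X # \<Gamma>) (liftT 1 (Suc m) S1) (liftT 1 (Suc m) T1)"
    using A_All.IH(2)[of "Suc m"] A_All.prems by simp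
  show ?case using asub.A_All[OF 1 2] by simp
qed

lemma asub_subst:
  "asub G A B \<Longrightarrow> G = replicate m (TVarB Top) @ TVarB Top # \<Gamma> \<Longrightarrow>
     asub (replicate m (TVarB Top) @ \<Gamma>) (substT A m S) (substT B m S)"
proof (induction arbitrary: m rule: asub.induct)
  case (A_Top G S)
  show ?case by (simp add: asub.A_Top)
next
  case (A_Refl G i)
  show ?case by (rule asub_refl)
next
  case (A_Var i G U T)
  have IH: "asub (replicate m (TVarB Top) @ \<Gamma>) (substT (liftT (Suc i) 0 U) m S) (substT T m S)"
    by (rule A_Var.IH[OF A_Var.prems])
  have G: "G = replicate m (TVarB Top) @ TVarB Top # \<Gamma>" by (rule A_Var.prems)
  consider "i < m" | "i = m" | "i > m" by linarith
  then show ?case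
  proof cases
    case 1
    then have U: "U = Top" using A_Var.hyps(2) G by (simp add: nth_append)
    have len: "i < length (replicate m (TVarB Top) @ \<Gamma>)" using 1 by simp
    have nth: "(replicate m (TVarB Top) @ \<Gamma>) ! i = TVarB Top" using 1 by (simp add: nth_append)
    have body: "asub (replicate m (TVarB Top) @ \<Gamma>) (liftT (Suc i) 0 Top) (substT T m S)" using IH U by simp
    show ?thesis using asub.A_Var[OF len nth body] 1 by simp
  next
    case 2
    then have U: "U = Top" using A_Var.hyps(2) G by (simp add: nth_append)
    then have "substT T m S = Top" using IH asub_TopE by simp
    then show ?thesis by (simp add: asub.A_Top)
  next
    case 3
    have e: "substT (liftT (Suc i) 0 U) m S = liftT (Suc (i - 1)) 0 U" using 3 subst_lift[of 0 m "Suc i" U S] by simp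
    have len: "i - 1 < length (replicate m (TVarB Top) @ \<Gamma>)" using A_Var.hyps(1) G 3 by simp
    have nth: "(replicate m (TVarB Top) @ \<Gamma>) ! (i - 1) = TVarB U"
      using A_Var.hyps(2) G 3 by (auto simp: nth_append nth_Cons')
    show ?thesis using asub.A_Var[OF len nth] IH e 3 by simp
  qed
next
  case (A_Arr G T1 S1 S2 T2)
  show ?case using asub.A_Arr[OF A_Arr.IH(1)[OF A_Arr.prems] A_Arr.IH(2)[OF A_Arr.prems]] by simp
next
  case (A_All G T0 S0 S1 T1)
  have 1: "asub (replicate m (TVarB Top) @ \<Gamma>) (substT T0 m S) (substT S0 m S)" by (rule A_All.IH(1)[OF A_All.prems])
  have 2: "asub (TVarB Top # replicate m (TVarB Top) @ \<Gamma>) (substT S1 (Suc m) S) (substT T1 (Suc m) S)"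
    using A_All.IH(2)[of "Suc m"] A_All.prems by simp
  show ?case using asub.A_All[OF 1 2] by simp
qed

lemma asub_narrow:
  "asub G A B \<Longrightarrow> G = G1 @ TVarB Top # G2 \<Longrightarrow> asub (G1 @ TVarB S # G2) A B"
proof (induction arbitrary: G1 rule: asub.induct)
  case (A_Top G S)
  show ?case by (simp add: asub.A_Top)
next
  case (A_Refl G i)
  show ?case by (rule asub_refl)
next
  case (A_Var i G U T)
  have IH: "asub (G1 @ TVarB S # G2) (liftT (Suc i) 0 U) T" by (rule A_Var.IH[OF A_Var.prems])
  have G: "G = G1 @ TVarB Top # G2" by (rule A_Var.prems)
  show ?case
  proof (cases "i = length G1")
    case True
    then have "U = Top" using A_Var.hyps(2) G by simp
    then have "T = Top" using IH asub_TopE by simp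
    then show ?thesis by (simp add: asub.A_Top)
  next
    case False
    have len: "i < length (G1 @ TVarB S # G2)" using A_Var.hyps(1) G by simp
    have nth: "(G1 @ TVarB S # G2) ! i = TVarB U" using A_Var.hyps(2) G False by (auto simp: nth_append nth_Cons')
    show ?thesis by (rule asub.A_Var[OF len nth IH])
  qed
next
  case (A_Arr G T1 S1 S2 T2)
  show ?case using asub.A_Arr[OF A_Arr.IH(1)[OF A_Arr.prems] A_Arr.IH(2)[OF A_Arr.prems]] by simp
next
  case (A_All G T0 S0 S1 T1)
  have 1: "asub (G1 @ TVarB S # G2) T0 S0" by (rule A_All.IH(1)[OF A_All.prems])
  have 2: "asub (TVarB Top # G1 @ TVarB S # G2) S1 T1"
    using A_All.IH(2)[of "TVarB Top # G1"] A_All.prems by simp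
  show ?case by (rule asub.A_All[OF 1 2])
qed

lemma subtype_wf: "\<Gamma> \<turnstile>\<^sub>s S <: T \<Longrightarrow> wfE \<Gamma> \<and> wfT \<Gamma> S \<and> wfT \<Gamma> T"
proof (induction rule: subtype.induct)
  case (SA_Var \<Gamma> i U)
  then show ?case using wf_lookup[of \<Gamma> i] by simp
next
  case (SA_All_Top \<Gamma> T0 S0 S1 T1)
  then show ?case using wfT_cong[of "TVarB Top # \<Gamma>" "TVarB S0 # \<Gamma>"] wfT_cong[of "TVarB Top # \<Gamma>" "TVarB T0 # \<Gamma>"] by simp
qed auto

lemma asub_sound: "asub \<Gamma> S T \<Longrightarrow> wfE \<Gamma> \<Longrightarrow> wfT \<Gamma> S \<Longrightarrow> wfT \<Gamma> T \<Longrightarrow> \<Gamma> \<turnstile>\<^sub>s S <: T"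
proof (induction rule: asub.induct)
  case (A_Var i \<Gamma> U T)
  have "wfT \<Gamma> (liftT (Suc i) 0 U)" using wf_lookup[OF A_Var.prems(1) A_Var.hyps(1)] A_Var.hyps(2) by simp
  then show ?case using A_Var by (blast intro: SA_Var SA_Trans)
next
  case (A_All \<Gamma> T0 S0 S1 T1)
  then show ?case using wfT_cong[of "TVarB Top # \<Gamma>" "TVarB S0 # \<Gamma>"] wfT_cong[of "TVarB Top # \<Gamma>" "TVarB T0 # \<Gamma>"]
    by (auto intro!: SA_All_Top)
qed (auto intro: SA_Top SA_Refl SA_Arr)

lemma asub_complete: "\<Gamma> \<turnstile>\<^sub>s S <: T \<Longrightarrow> asub \<Gamma> S T"
proof (induction rule: subtype.induct)
  case (SA_Trans \<Gamma> S T U)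
  from SA_Trans.IH show ?case by (rule asub_trans)
qed (auto intro: A_Top A_Refl A_Arr A_All A_Var[OF _ _ asub_refl] asub_refl)

lemma typing_wf: "\<Gamma> \<turnstile>\<^sub>t t : T \<Longrightarrow> wfE \<Gamma> \<and> wfT \<Gamma> T"
proof (induction rule: typing.induct)
  case (T_Var \<Gamma> i U)
  then show ?case using wf_lookup[of \<Gamma> i] by simp
next
  case (T_Sub \<Gamma> t T T')
  then show ?case using subtype_wf by blast
next
  case (T_Abs S \<Gamma> t T)
  then show ?case using wfT_subst[of "[]" "VarB S" \<Gamma> T Top "[]"] by simp
next
  case (T_TApp \<Gamma> t S T S')
  then show ?case using wfT_subst[of "[]" "TVarB S" \<Gamma> T S' "[]"] subtype_wf by auto
qed auto

section \<open>Inversion of typing\<close>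

lemma inv_Top: "\<Gamma> \<turnstile>\<^sub>t t : R \<Longrightarrow> t = TopT \<Longrightarrow> asub \<Gamma> Top R"
proof (induction rule: typing.induct)
  case (T_Sub \<Gamma> t T T')
  then show ?case using asub_complete[OF T_Sub.hyps(2)] asub_trans by blast
qed (auto intro: asub_refl)

lemma inv_Var: "\<Gamma> \<turnstile>\<^sub>t t : R \<Longrightarrow> t = Var i \<Longrightarrow> \<exists>U. i < length \<Gamma> \<and> \<Gamma> ! i = VarB U \<and> asub \<Gamma> (liftT (Suc i) 0 U) R"
proof (induction rule: typing.induct)
  case (T_Sub \<Gamma> t T T')
  then show ?case using asub_complete[OF T_Sub.hyps(2)] asub_trans by blast
qed (auto intro: asub_refl)

lemma inv_Abs: "\<Gamma> \<turnstile>\<^sub>t t : R \<Longrightarrow> t = Abs S u \<Longrightarrow> \<exists>T0. VarB S # \<Gamma> \<turnstile>\<^sub>t u : T0 \<and> asub \<Gamma> (Arr S (substT T0 0 Top)) R"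
proof (induction rule: typing.induct)
  case (T_Sub \<Gamma> t T T')
  then show ?case using asub_complete[OF T_Sub.hyps(2)] asub_trans by blast
qed (auto intro: asub_refl)

lemma inv_TAbs: "\<Gamma> \<turnstile>\<^sub>t t : R \<Longrightarrow> t = TAbs S u \<Longrightarrow> \<exists>T0. TVarB S # \<Gamma> \<turnstile>\<^sub>t u : T0 \<and> asub \<Gamma> (All S T0) R"
proof (induction rule: typing.induct)
  case (T_Sub \<Gamma> t T T')
  then show ?case using asub_complete[OF T_Sub.hyps(2)] asub_trans by blast
qed (auto intro: asub_refl)

lemma inv_App: "\<Gamma> \<turnstile>\<^sub>t t : R \<Longrightarrow> t = App s u \<Longrightarrow> \<exists>S T. \<Gamma> \<turnstile>\<^sub>t s : Arr S T \<and> \<Gamma> \<turnstile>\<^sub>t u : S \<and> asub \<Gamma> T R"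
proof (induction rule: typing.induct)
  case (T_Sub \<Gamma> t T T')
  then show ?case using asub_complete[OF T_Sub.hyps(2)] asub_trans by blast
qed (auto intro: asub_refl)

lemma inv_TApp: "\<Gamma> \<turnstile>\<^sub>t t : R \<Longrightarrow> t = TApp s S' \<Longrightarrow>
    \<exists>S T. \<Gamma> \<turnstile>\<^sub>t s : All S T \<and> \<Gamma> \<turnstile>\<^sub>s S' <: S \<and> asub \<Gamma> (substT T 0 S') R"
proof (induction rule: typing.induct)
  case (T_Sub \<Gamma> t T T')
  then show ?case using asub_complete[OF T_Sub.hyps(2)] asub_trans by blast
qed (auto intro: asub_refl)


lemma lift_measure: "i < n \<Longrightarrow> (case liftT (Suc i) 0 U of TVar j \<Rightarrow> n - j | _ \<Rightarrow> 0) < n - i"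
  by (cases U) auto

function expose :: "env \<Rightarrow> ty \<Rightarrow> ty" where
  "expose \<Gamma> (TVar i) = (if i < length \<Gamma> \<and> is_TVarB (\<Gamma> ! i) then expose \<Gamma> (liftT (Suc i) 0 (bty (\<Gamma> ! i))) else TVar i)"
| "expose \<Gamma> Top = Top"
| "expose \<Gamma> (Arr S T) = Arr S T"
| "expose \<Gamma> (All S T) = All S T"
  by pat_completeness auto
termination
  by (relation "measure (\<lambda>(\<Gamma>, T). case T of TVar i \<Rightarrow> length \<Gamma> - i | _ \<Rightarrow> 0)") (auto intro: lift_measure)

lemma is_TVarB_ex: "is_TVarB B \<longleftrightarrow> (\<exists>U. B = TVarB U)"
  by (cases B) auto

lemma expose_sub: "asub \<Gamma> M (expose \<Gamma> M)"
proof (induction \<Gamma> M rule: expose.induct)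
  case (1 \<Gamma> i)
  show ?case
  proof (cases "i < length \<Gamma> \<and> is_TVarB (\<Gamma> ! i)")
    case True
    then obtain U where U: "\<Gamma> ! i = TVarB U" using is_TVarB_ex by blast
    have "asub \<Gamma> (liftT (Suc i) 0 U) (expose \<Gamma> (TVar i))" using 1 True U by simp
    then show ?thesis using asub.A_Var[OF _ U] True by blast
  next
    case False
    then have "expose \<Gamma> (TVar i) = TVar i" by auto
    then show ?thesis by (simp add: asub.A_Refl)
  qed
qed (simp_all add: asub_refl)

lemma expose_wf: "wfE \<Gamma> \<Longrightarrow> wfT \<Gamma> M \<Longrightarrow> wfT \<Gamma> (expose \<Gamma> M)"
proof (induction \<Gamma> M rule: expose.induct)
  case (1 \<Gamma> i)
  then show ?case using wf_lookup[of \<Gamma> i] by auto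
qed simp_all

lemma expose_Arr: "asub \<Gamma> M (Arr S T) \<Longrightarrow> \<exists>S1 T1. expose \<Gamma> M = Arr S1 T1 \<and> asub \<Gamma> S S1 \<and> asub \<Gamma> T1 T"
proof (induction \<Gamma> M rule: expose.induct)
  case (1 \<Gamma> i)
  from asub_VarE[OF 1(2)] obtain U where U: "i < length \<Gamma>" "\<Gamma> ! i = TVarB U" "asub \<Gamma> (liftT (Suc i) 0 U) (Arr S T)"
    by auto
  then show ?case using 1(1) by simp
next
  case (2 \<Gamma>) then show ?case using asub_TopE by blast
next
  case (3 \<Gamma> S1 T1) then show ?case using asub_ArrE by fastforce
next
  case (4 \<Gamma> S1 T1) then show ?case using asub_AllE by fastforce
qed

lemma expose_All: "asub \<Gamma> M (All S T) \<Longrightarrow> \<exists>S1 T1. expose \<Gamma> M = All S1 T1 \<and> asub \<Gamma> S S1 \<and> asub (TVarB Top # \<Gamma>) T1 T"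
proof (induction \<Gamma> M rule: expose.induct)
  case (1 \<Gamma> i)
  from asub_VarE[OF 1(2)] obtain U where U: "i < length \<Gamma>" "\<Gamma> ! i = TVarB U" "asub \<Gamma> (liftT (Suc i) 0 U) (All S T)"
    by auto
  then show ?case using 1(1) by simp
next
  case (2 \<Gamma>) then show ?case using asub_TopE by blast
next
  case (3 \<Gamma> S1 T1) then show ?case using asub_ArrE by fastforce
next
  case (4 \<Gamma> S1 T1) then show ?case using asub_AllE by fastforce
qed

primrec synth :: "env \<Rightarrow> trm \<Rightarrow> ty option" where
  "synth \<Gamma> TopT = Some Top"
| "synth \<Gamma> (Var i) = (if i < length \<Gamma> \<and> is_VarB (\<Gamma> ! i) then Some (liftT (Suc i) 0 (bty (\<Gamma> ! i))) else None)"
| "synth \<Gamma> (Abs S t) = None"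
| "synth \<Gamma> (TAbs S t) = None"
| "synth \<Gamma> (App s t) = (case synth \<Gamma> s of None \<Rightarrow> None | Some M \<Rightarrow>
     (case expose \<Gamma> M of Arr A B \<Rightarrow> (if \<Gamma> \<turnstile>\<^sub>t t : A then Some B else None) | _ \<Rightarrow> None))"
| "synth \<Gamma> (TApp s S') = (case synth \<Gamma> s of None \<Rightarrow> None | Some M \<Rightarrow>
     (case expose \<Gamma> M of All A B \<Rightarrow> (if asub \<Gamma> S' A then Some (substT B 0 S') else None) | _ \<Rightarrow> None))"

lemma is_VarB_ex: "is_VarB B \<longleftrightarrow> (\<exists>U. B = VarB U)"
  by (cases B) auto

lemma synth_sound: "wfE \<Gamma> \<Longrightarrow> wf_trm \<Gamma> t \<Longrightarrow> synth \<Gamma> t = Some M \<Longrightarrow> \<Gamma> \<turnstile>\<^sub>t t : M"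
proof (induction t arbitrary: M)
  case TopT
  then show ?case by (auto intro: T_Top)
next
  case (Var i)
  then obtain U where U: "\<Gamma> ! i = VarB U" "i < length \<Gamma>" using is_VarB_ex by (auto split: if_splits)
  then show ?case using Var T_Var[OF Var(1) U(2) U(1)] by simp
next
  case (App s u)
  obtain M0 where M0: "synth \<Gamma> s = Some M0" using App.prems by (auto split: option.splits)
  have s: "\<Gamma> \<turnstile>\<^sub>t s : M0" using App M0 by simp
  obtain A where E: "expose \<Gamma> M0 = Arr A M" "\<Gamma> \<turnstile>\<^sub>t u : A"
    using App.prems M0 by (auto split: ty.splits if_splits)
  have wM0: "wfT \<Gamma> M0" using typing_wf[OF s] by simp
  have "\<Gamma> \<turnstile>\<^sub>s M0 <: Arr A M"
    using asub_sound[OF expose_sub[of \<Gamma> M0] App.prems(1) wM0 expose_wf[OF App.prems(1) wM0]] E by simp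
  then show ?case using T_App[OF T_Sub[OF s] E(2)] by blast
next
  case (TApp s S')
  obtain M0 where M0: "synth \<Gamma> s = Some M0" using TApp.prems by (auto split: option.splits)
  have s: "\<Gamma> \<turnstile>\<^sub>t s : M0" using TApp M0 by simp
  obtain A B where E: "expose \<Gamma> M0 = All A B" "asub \<Gamma> S' A" "M = substT B 0 S'"
    using TApp.prems M0 by (auto split: ty.splits if_splits)
  have wM0: "wfT \<Gamma> M0" using typing_wf[OF s] by simp
  have wE: "wfT \<Gamma> (All A B)" using expose_wf[OF TApp.prems(1) wM0] E by simp
  have "\<Gamma> \<turnstile>\<^sub>s M0 <: All A B"
    using asub_sound[OF expose_sub[of \<Gamma> M0] TApp.prems(1) wM0 expose_wf[OF TApp.prems(1) wM0]] E by simp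
  moreover have "\<Gamma> \<turnstile>\<^sub>s S' <: A" using asub_sound[OF E(2) TApp.prems(1)] TApp.prems(2) wE by simp
  ultimately show ?case using T_TApp[OF T_Sub[OF s]] E(3) by blast
qed simp_all

lemma synth_complete:
  "\<Gamma> \<turnstile>\<^sub>t t : R \<Longrightarrow> wfE \<Gamma> \<Longrightarrow> wf_trm \<Gamma> t \<Longrightarrow> beta_normal t \<Longrightarrow> (\<forall>S u. t \<noteq> Abs S u \<and> t \<noteq> TAbs S u) \<Longrightarrow>
    \<exists>M. synth \<Gamma> t = Some M \<and> asub \<Gamma> M R"
proof (induction t arbitrary: R)
  case TopT
  then show ?case using inv_Top by auto
next
  case (Var i)
  then show ?case using inv_Var[OF Var.prems(1) refl] by auto
next
  case (App s u)
  obtain S T where H: "\<Gamma> \<turnstile>\<^sub>t s : Arr S T" "\<Gamma> \<turnstile>\<^sub>t u : S" "asub \<Gamma> T R" using inv_App[OF App.prems(1) refl] by blast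
  have sn: "\<forall>S u. s \<noteq> Abs S u" using App.prems(4) by simp
  have st: "\<forall>S u. s \<noteq> TAbs S u"
  proof (intro allI notI)
    fix S0 u0 assume "s = TAbs S0 u0"
    then obtain T0 where "asub \<Gamma> (All S0 T0) (Arr S T)" using inv_TAbs[OF H(1)] by blast
    then show False using asub_AllE by blast
  qed
  obtain M where M: "synth \<Gamma> s = Some M" "asub \<Gamma> M (Arr S T)"
    using App.IH(1)[OF H(1) App.prems(2)] App.prems sn st by auto
  obtain S1 T1 where E: "expose \<Gamma> M = Arr S1 T1" "asub \<Gamma> S S1" "asub \<Gamma> T1 T" using expose_Arr[OF M(2)] by blast
  have wM: "wfT \<Gamma> M" using typing_wf[OF synth_sound[OF App.prems(2) _ M(1)]] App.prems(3) by simp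
  have wE: "wfT \<Gamma> (Arr S1 T1)" using expose_wf[OF App.prems(2) wM] E by simp
  have wS: "wfT \<Gamma> S" using typing_wf[OF H(2)] by simp
  have "\<Gamma> \<turnstile>\<^sub>t u : S1" using T_Sub[OF H(2) asub_sound[OF E(2) App.prems(2) wS]] wE by simp
  then show ?case using M E H(3) asub_trans by auto
next
  case (TApp s S')
  obtain S T where H: "\<Gamma> \<turnstile>\<^sub>t s : All S T" "\<Gamma> \<turnstile>\<^sub>s S' <: S" "asub \<Gamma> (substT T 0 S') R"
    using inv_TApp[OF TApp.prems(1) refl] by blast
  have sn: "\<forall>S u. s \<noteq> TAbs S u" using TApp.prems(4) by simp
  have st: "\<forall>S u. s \<noteq> Abs S u"
  proof (intro allI notI)
    fix S0 u0 assume "s = Abs S0 u0"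
    then obtain T0 where "asub \<Gamma> (Arr S0 T0) (All S T)" using inv_Abs[OF H(1)] by blast
    then show False using asub_ArrE by blast
  qed
  obtain M where M: "synth \<Gamma> s = Some M" "asub \<Gamma> M (All S T)"
    using TApp.IH(1)[OF H(1) TApp.prems(2)] TApp.prems sn st by auto
  obtain S1 T1 where E: "expose \<Gamma> M = All S1 T1" "asub \<Gamma> S S1" "asub (TVarB Top # \<Gamma>) T1 T" using expose_All[OF M(2)] by blast
  have a1: "asub \<Gamma> S' S1" using asub_trans[OF asub_complete[OF H(2)] E(2)] .
  have a2: "asub \<Gamma> (substT T1 0 S') (substT T 0 S')" using asub_subst[OF E(3), of 0 \<Gamma> S'] by simp
  show ?case using M E a1 asub_trans[OF a2 H(3)] by auto
qed (auto)

lemma check_Abs: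
  assumes wf: "wfE \<Gamma>" "wfT \<Gamma> S" "wfT \<Gamma> T"
  shows "\<Gamma> \<turnstile>\<^sub>t Abs S u : T \<longleftrightarrow> (T = Top \<and> VarB S # \<Gamma> \<turnstile>\<^sub>t u : Top) \<or>
     (\<exists>S' T'. T = Arr S' T' \<and> asub \<Gamma> S' S \<and> VarB S # \<Gamma> \<turnstile>\<^sub>t u : liftT 1 0 T')"
proof
  assume H: "\<Gamma> \<turnstile>\<^sub>t Abs S u : T"
  obtain T0 where T0: "VarB S # \<Gamma> \<turnstile>\<^sub>t u : T0" "asub \<Gamma> (Arr S (substT T0 0 Top)) T" using inv_Abs[OF H refl] by blast
  have wT0: "wfT (VarB S # \<Gamma>) T0" and wE: "wfE (VarB S # \<Gamma>)" using typing_wf[OF T0(1)] by auto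
  from asub_ArrE[OF T0(2)] show "(T = Top \<and> VarB S # \<Gamma> \<turnstile>\<^sub>t u : Top) \<or>
     (\<exists>S' T'. T = Arr S' T' \<and> asub \<Gamma> S' S \<and> VarB S # \<Gamma> \<turnstile>\<^sub>t u : liftT 1 0 T')"
  proof (elim disjE exE conjE)
    assume "T = Top"
    moreover have "VarB S # \<Gamma> \<turnstile>\<^sub>t u : Top" using T_Sub[OF T0(1) SA_Top[OF wE wT0]] .
    ultimately show ?thesis by simp
  next
    fix S' T' assume A: "T = Arr S' T'" "asub \<Gamma> S' S" "asub \<Gamma> (substT T0 0 Top) T'"
    have e: "liftT 1 0 (substT T0 0 Top) = T0" by (rule lift_subst_Top[OF wT0]) simp_all
    have "asub (VarB S # \<Gamma>) T0 (liftT 1 0 T')" using asub_weak[OF A(3), of 0 \<Gamma> "VarB S"] e by simp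
    moreover have "wfT (VarB S # \<Gamma>) (liftT 1 0 T')" using wfT_lift0[of \<Gamma> T' "[VarB S]"] wf A(1) by simp
    ultimately have "VarB S # \<Gamma> \<turnstile>\<^sub>t u : liftT 1 0 T'" using T_Sub[OF T0(1) asub_sound] wE wT0 by blast
    then show ?thesis using A by blast
  qed
next
  assume "(T = Top \<and> VarB S # \<Gamma> \<turnstile>\<^sub>t u : Top) \<or> (\<exists>S' T'. T = Arr S' T' \<and> asub \<Gamma> S' S \<and> VarB S # \<Gamma> \<turnstile>\<^sub>t u : liftT 1 0 T')"
  then show "\<Gamma> \<turnstile>\<^sub>t Abs S u : T"
  proof (elim disjE exE conjE)
    assume "T = Top" "VarB S # \<Gamma> \<turnstile>\<^sub>t u : Top"
    then show ?thesis using T_Sub[OF T_Abs SA_Top[OF wf(1)]] wf by fastforce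
  next
    fix S' T' assume A: "T = Arr S' T'" "asub \<Gamma> S' S" "VarB S # \<Gamma> \<turnstile>\<^sub>t u : liftT 1 0 T'"
    have "\<Gamma> \<turnstile>\<^sub>t Abs S u : Arr S T'" using T_Abs[OF A(3)] by simp
    moreover have "\<Gamma> \<turnstile>\<^sub>s Arr S T' <: Arr S' T'"
      using SA_Arr[OF asub_sound[OF A(2) wf(1)] SA_Refl[OF wf(1)]] wf A(1) by simp
    ultimately show ?thesis using A(1) T_Sub by blast
  qed
qed

lemma check_TAbs:
  assumes wf: "wfE \<Gamma>" "wfT \<Gamma> S" "wfT \<Gamma> T"
  shows "\<Gamma> \<turnstile>\<^sub>t TAbs S u : T \<longleftrightarrow> (T = Top \<and> TVarB S # \<Gamma> \<turnstile>\<^sub>t u : Top) \<or>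
     (\<exists>S' T'. T = All S' T' \<and> asub \<Gamma> S' S \<and> TVarB S # \<Gamma> \<turnstile>\<^sub>t u : T')"
proof
  assume H: "\<Gamma> \<turnstile>\<^sub>t TAbs S u : T"
  obtain T0 where T0: "TVarB S # \<Gamma> \<turnstile>\<^sub>t u : T0" "asub \<Gamma> (All S T0) T" using inv_TAbs[OF H refl] by blast
  have wT0: "wfT (TVarB S # \<Gamma>) T0" and wE: "wfE (TVarB S # \<Gamma>)" using typing_wf[OF T0(1)] by auto
  from asub_AllE[OF T0(2)] show "(T = Top \<and> TVarB S # \<Gamma> \<turnstile>\<^sub>t u : Top) \<or>
     (\<exists>S' T'. T = All S' T' \<and> asub \<Gamma> S' S \<and> TVarB S # \<Gamma> \<turnstile>\<^sub>t u : T')"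
  proof (elim disjE exE conjE)
    assume "T = Top"
    moreover have "TVarB S # \<Gamma> \<turnstile>\<^sub>t u : Top" using T_Sub[OF T0(1) SA_Top[OF wE wT0]] .
    ultimately show ?thesis by simp
  next
    fix S' T' assume A: "T = All S' T'" "asub \<Gamma> S' S" "asub (TVarB Top # \<Gamma>) T0 T'"
    have "asub (TVarB S # \<Gamma>) T0 T'" using asub_narrow[OF A(3), of "[]" \<Gamma> S] by simp
    moreover have "wfT (TVarB S # \<Gamma>) T'" using wf(3) A(1) wfT_cong[of "TVarB S' # \<Gamma>" "TVarB S # \<Gamma>" T'] by simp
    ultimately have "TVarB S # \<Gamma> \<turnstile>\<^sub>t u : T'" using T_Sub[OF T0(1) asub_sound] wE wT0 by blast
    then show ?thesis using A by blast
  qed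
next
  assume "(T = Top \<and> TVarB S # \<Gamma> \<turnstile>\<^sub>t u : Top) \<or> (\<exists>S' T'. T = All S' T' \<and> asub \<Gamma> S' S \<and> TVarB S # \<Gamma> \<turnstile>\<^sub>t u : T')"
  then show "\<Gamma> \<turnstile>\<^sub>t TAbs S u : T"
  proof (elim disjE exE conjE)
    assume "T = Top" "TVarB S # \<Gamma> \<turnstile>\<^sub>t u : Top"
    then show ?thesis using T_Sub[OF T_TAbs SA_Top[OF wf(1)]] wf by fastforce
  next
    fix S' T' assume A: "T = All S' T'" "asub \<Gamma> S' S" "TVarB S # \<Gamma> \<turnstile>\<^sub>t u : T'"
    have "\<Gamma> \<turnstile>\<^sub>t TAbs S u : All S T'" using T_TAbs[OF A(3)] by simp
    moreover have wT': "wfT (TVarB Top # \<Gamma>) T'" using wf(3) A(1) wfT_cong[of "TVarB S' # \<Gamma>" "TVarB Top # \<Gamma>" T'] by simp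
    moreover have "\<Gamma> \<turnstile>\<^sub>s All S T' <: All S' T'"
      using SA_All_Top[OF asub_sound[OF A(2) wf(1)] SA_Refl[OF _ wT']] wf A(1) by simp
    ultimately show ?thesis using A(1) T_Sub by blast
  qed
qed

lemma check_other:
  assumes wf: "wfE \<Gamma>" "wf_trm \<Gamma> t" "wfT \<Gamma> T" and bn: "beta_normal t"
    and na: "\<forall>S u. t \<noteq> Abs S u \<and> t \<noteq> TAbs S u"
  shows "\<Gamma> \<turnstile>\<^sub>t t : T \<longleftrightarrow> (\<exists>M. synth \<Gamma> t = Some M \<and> asub \<Gamma> M T)"
proof
  assume "\<Gamma> \<turnstile>\<^sub>t t : T" then show "\<exists>M. synth \<Gamma> t = Some M \<and> asub \<Gamma> M T" using synth_complete wf bn na by blast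
next
  assume "\<exists>M. synth \<Gamma> t = Some M \<and> asub \<Gamma> M T"
  then obtain M where M: "synth \<Gamma> t = Some M" "asub \<Gamma> M T" by blast
  have t: "\<Gamma> \<turnstile>\<^sub>t t : M" by (rule synth_sound[OF wf(1,2) M(1)])
  show "\<Gamma> \<turnstile>\<^sub>t t : T" using T_Sub[OF t asub_sound[OF M(2) wf(1)]] typing_wf[OF t] wf by blast
qed


lemmas cmp_basic = cmp_if cmp_eq cmp_less cmp_le cmp_conj cmp_not cmp_disj cmp_add cmp_sub cmp_mul
  cmp_pe cmp_p1 cmp_p2 cmp_Suc cmp_id cmp_const

lemma enc_ty_pe[simp]: "enc_ty Top = pe 0 0" "enc_ty (TVar i) = pe 1 i"
  "enc_ty (Arr S T) = pe 2 (pe (enc_ty S) (enc_ty T))" "enc_ty (All S T) = pe 3 (pe (enc_ty S) (enc_ty T))"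
  by (simp_all add: pe_def)
lemma enc_trm_pe[simp]: "enc_trm TopT = pe 0 0" "enc_trm (Var i) = pe 1 i"
  "enc_trm (Abs S t) = pe 2 (pe (enc_ty S) (enc_trm t))" "enc_trm (TAbs S t) = pe 3 (pe (enc_ty S) (enc_trm t))"
  "enc_trm (App s t) = pe 4 (pe (enc_trm s) (enc_trm t))" "enc_trm (TApp t S) = pe 5 (pe (enc_trm t) (enc_ty S))"
  by (simp_all add: pe_def)
lemma enc_binding_pe[simp]: "enc_binding (VarB T) = pe 0 (enc_ty T)" "enc_binding (TVarB T) = pe 1 (enc_ty T)"
  by (simp_all add: pe_def)
lemma enc_env_simps[simp]: "enc_env [] = 0" "enc_env (B # \<Gamma>) = Suc (pe (enc_binding B) (enc_env \<Gamma>))"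
  by (simp_all add: enc_env_def pe_def)

declare enc_ty.simps[simp del] enc_trm.simps[simp del] enc_binding.simps[simp del]

lemma inj_enc_ty: "inj enc_ty"
proof (rule injI)
  show "enc_ty S = enc_ty T \<Longrightarrow> S = T" for S T
    by (induct S arbitrary: T; case_tac T; simp)
qed

lemma inj_enc_trm: "inj enc_trm"
proof (rule injI)
  show "enc_trm s = enc_trm t \<Longrightarrow> s = t" for s t
    by (induct s arbitrary: t; case_tac t; simp add: inj_eq[OF inj_enc_ty])
qed

lemma inj_enc_binding: "inj enc_binding"
proof (rule injI)
  show "enc_binding s = enc_binding t \<Longrightarrow> s = t" for s t
    by (cases s; cases t; simp add: inj_eq[OF inj_enc_ty])
qed

lemma inj_enc_env: "inj enc_env"
proof (rule injI)
  show "enc_env s = enc_env t \<Longrightarrow> s = t" for s t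
    by (induct s arbitrary: t; case_tac t; simp add: inj_eq[OF inj_enc_binding])
qed

definition DT :: "nat \<Rightarrow> ty" where "DT = inv enc_ty"
definition DM :: "nat \<Rightarrow> trm" where "DM = inv enc_trm"
definition DE :: "nat \<Rightarrow> env" where "DE = inv enc_env"

lemma DT_enc[simp]: "DT (enc_ty T) = T" unfolding DT_def by (rule inv_f_f[OF inj_enc_ty])
lemma DM_enc[simp]: "DM (enc_trm t) = t" unfolding DM_def by (rule inv_f_f[OF inj_enc_trm])
lemma DE_enc[simp]: "DE (enc_env G) = G" unfolding DE_def by (rule inv_f_f[OF inj_enc_env])

lemma DT_pe[simp]: "DT (pe 0 0) = Top" "DT (pe 1 i) = TVar i"
  "DT (pe 2 (pe (enc_ty S) (enc_ty T))) = Arr S T" "DT (pe 3 (pe (enc_ty S) (enc_ty T))) = All S T"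
  using DT_enc[of Top] DT_enc[of "TVar i"] DT_enc[of "Arr S T"] DT_enc[of "All S T"] by simp_all
lemma DM_pe[simp]: "DM (pe 0 0) = TopT" "DM (pe 1 i) = Var i"
  "DM (pe 2 (pe (enc_ty S) (enc_trm t))) = Abs S t" "DM (pe 3 (pe (enc_ty S) (enc_trm t))) = TAbs S t"
  "DM (pe 4 (pe (enc_trm s) (enc_trm t))) = App s t" "DM (pe 5 (pe (enc_trm t) (enc_ty S))) = TApp t S"
  using DM_enc[of TopT] DM_enc[of "Var i"] DM_enc[of "Abs S t"] DM_enc[of "TAbs S t"]
    DM_enc[of "App s t"] DM_enc[of "TApp t S"] by simp_all
lemma DE_pe[simp]: "DE 0 = []" "DE (Suc (pe (pe 0 (enc_ty U)) (enc_env \<Gamma>))) = VarB U # \<Gamma>"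
  "DE (Suc (pe (pe 1 (enc_ty U)) (enc_env \<Gamma>))) = TVarB U # \<Gamma>"
  using DE_enc[of "[]"] DE_enc[of "VarB U # \<Gamma>"] DE_enc[of "TVarB U # \<Gamma>"] by simp_all

definition TLc :: "nat \<Rightarrow> nat" where "TLc l = p2 (l - 1)"
definition NTHB :: "nat \<Rightarrow> nat \<Rightarrow> nat" where "NTHB g i = p1 ((TLc ^^ i) g - 1)"

lemma TLc_drop: "i \<le> length \<Gamma> \<Longrightarrow> (TLc ^^ i) (enc_env \<Gamma>) = enc_env (drop i \<Gamma>)"
proof (induct i)
  case (Suc i)
  then have "drop i \<Gamma> = \<Gamma> ! i # drop (Suc i) \<Gamma>" by (simp add: Cons_nth_drop_Suc)
  then show ?case using Suc by (simp add: TLc_def)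
qed simp

lemma NTHB_enc: "i < length \<Gamma> \<Longrightarrow> NTHB (enc_env \<Gamma>) i = enc_binding (\<Gamma> ! i)"
proof -
  assume i: "i < length \<Gamma>"
  then have "drop i \<Gamma> = \<Gamma> ! i # drop (Suc i) \<Gamma>" by (simp add: Cons_nth_drop_Suc)
  then show ?thesis using TLc_drop[of i \<Gamma>] i by (simp add: NTHB_def)
qed

lemma cmp_TLc: "cmp Q TLc" unfolding TLc_def by (intro cmp_basic)

lemma cmp_NTHB[intro]: "cmp P a \<Longrightarrow> cmp P b \<Longrightarrow> cmp P (\<lambda>x. NTHB (a x) (b x))"
  unfolding NTHB_def
  by (intro cmp_p1 cmp_sub cmp_const cmp_iter[where Q="\<lambda>_. True", OF cmp_TLc]) auto

lemma nth_TVarB_code: "wfE \<Gamma> \<Longrightarrow> i < length \<Gamma> \<Longrightarrow> \<Gamma> ! i = B \<Longrightarrow> p2 (NTHB (enc_env \<Gamma>) i) = enc_ty (bty B)"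
  by (cases B) (simp_all add: NTHB_enc)

definition PL :: "nat \<Rightarrow> bool" where "PL x \<longleftrightarrow> (\<exists>n k T. x = pe n (pe k (enc_ty T)))"
definition fL :: "nat \<Rightarrow> nat" where "fL x = enc_ty (liftT (p1 x) (p1 (p2 x)) (DT (p2 (p2 x))))"
definition muL :: "nat \<Rightarrow> nat" where "muL x = size (DT (p2 (p2 x)))"
definition dL :: "nat \<Rightarrow> bool" where "dL x \<longleftrightarrow> p1 (p2 (p2 x)) < 2"
definition bL :: "nat \<Rightarrow> nat" where
  "bL x = (if p1 (p2 (p2 x)) = 0 then p2 (p2 x) else if p2 (p2 (p2 x)) < p1 (p2 x) then p2 (p2 x)
           else pe 1 (p2 (p2 (p2 x)) + p1 x))"
definition c1L :: "nat \<Rightarrow> nat" where "c1L x = pe (p1 x) (pe (p1 (p2 x)) (p1 (p2 (p2 (p2 x)))))"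
definition c2L :: "nat \<Rightarrow> nat" where
  "c2L y = pe (p1 (p1 y)) (pe (if p1 (p2 (p2 (p1 y))) = 3 then Suc (p1 (p2 (p1 y))) else p1 (p2 (p1 y)))
             (p2 (p2 (p2 (p2 (p1 y))))))"
definition hL :: "nat \<Rightarrow> nat" where "hL y = pe (p1 (p2 (p2 (p1 y)))) (pe (p1 (p2 y)) (p2 (p2 y)))"

lemma fL_enc[simp]: "fL (pe n (pe k (enc_ty T))) = enc_ty (liftT n k T)" by (simp add: fL_def)

interpretation L: scheme PL fL muL dL bL c1L c2L hL
proof
  show "cmp PL (\<lambda>x. of_bool (dL x))" unfolding dL_def by (intro cmp_basic)
  show "cmp (\<lambda>x. PL x \<and> dL x) bL" unfolding bL_def by (intro cmp_basic)
  show "cmp (\<lambda>x. PL x \<and> \<not> dL x) c1L" unfolding c1L_def by (intro cmp_basic)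
  show "cmp (\<lambda>y. PL (p1 y) \<and> \<not> dL (p1 y) \<and> p2 y = fL (c1L (p1 y))) c2L" unfolding c2L_def by (intro cmp_basic)
  show "cmp (\<lambda>y. PL (p1 y) \<and> \<not> dL (p1 y) \<and> p1 (p2 y) = fL (c1L (p1 y)) \<and>
             p2 (p2 y) = fL (c2L (pe (p1 y) (p1 (p2 y))))) hL" unfolding hL_def by (intro cmp_basic)
  show "PL x \<Longrightarrow> dL x \<Longrightarrow> fL x = bL x" for x
  proof -
    assume "PL x" "dL x"
    then obtain n k T where x: "x = pe n (pe k (enc_ty T))" unfolding PL_def by blast
    show ?thesis using \<open>dL x\<close> unfolding x fL_enc by (cases T) (simp_all add: dL_def bL_def)
  qed
  show "PL x \<Longrightarrow> \<not> dL x \<Longrightarrow> PL (c1L x) \<and> muL (c1L x) < muL x \<and> PL (c2L (pe x (fL (c1L x)))) \<and>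
             muL (c2L (pe x (fL (c1L x)))) < muL x \<and> fL x = hL (pe x (pe (fL (c1L x)) (fL (c2L (pe x (fL (c1L x)))))))" for x
    by (auto simp: PL_def dL_def c1L_def c2L_def hL_def muL_def) (case_tac T; auto simp: PL_def)+
qed

lemma cmp_fL: "cmp P a \<Longrightarrow> (\<And>x. P x \<Longrightarrow> PL (a x)) \<Longrightarrow> cmp P (\<lambda>x. fL (a x))"
  by (rule cmp_comp[OF L.computable])


definition PS :: "nat \<Rightarrow> bool" where "PS x \<longleftrightarrow> (\<exists>T k U. x = pe (enc_ty T) (pe k (enc_ty U)))"
definition fS :: "nat \<Rightarrow> nat" where "fS x = enc_ty (substT (DT (p1 x)) (p1 (p2 x)) (DT (p2 (p2 x))))"
definition muS :: "nat \<Rightarrow> nat" where "muS x = size (DT (p1 x))"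
definition dS :: "nat \<Rightarrow> bool" where "dS x \<longleftrightarrow> p1 (p1 x) < 2"
definition bS :: "nat \<Rightarrow> nat" where
  "bS x = (if p1 (p1 x) = 0 then p1 x else if p1 (p2 x) < p2 (p1 x) then pe 1 (p2 (p1 x) - 1)
           else if p2 (p1 x) = p1 (p2 x) then fL (pe (p1 (p2 x)) (pe 0 (p2 (p2 x)))) else p1 x)"
definition c1S :: "nat \<Rightarrow> nat" where "c1S x = pe (p1 (p2 (p1 x))) (p2 x)"
definition c2S :: "nat \<Rightarrow> nat" where
  "c2S y = pe (p2 (p2 (p1 (p1 y)))) (pe (if p1 (p1 (p1 y)) = 3 then Suc (p1 (p2 (p1 y))) else p1 (p2 (p1 y)))
             (p2 (p2 (p1 y))))"
definition hS :: "nat \<Rightarrow> nat" where "hS y = pe (p1 (p1 (p1 y))) (pe (p1 (p2 y)) (p2 (p2 y)))"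

lemma fS_enc[simp]: "fS (pe (enc_ty T) (pe k (enc_ty U))) = enc_ty (substT T k U)" by (simp add: fS_def)

interpretation S: scheme PS fS muS dS bS c1S c2S hS
proof
  show "cmp PS (\<lambda>x. of_bool (dS x))" unfolding dS_def by (intro cmp_basic)
  show "cmp (\<lambda>x. PS x \<and> dS x) bS" unfolding bS_def
    by (intro cmp_basic cmp_fL) (auto simp: PS_def PL_def)
  show "cmp (\<lambda>x. PS x \<and> \<not> dS x) c1S" unfolding c1S_def by (intro cmp_basic)
  show "cmp (\<lambda>y. PS (p1 y) \<and> \<not> dS (p1 y) \<and> p2 y = fS (c1S (p1 y))) c2S" unfolding c2S_def by (intro cmp_basic)
  show "cmp (\<lambda>y. PS (p1 y) \<and> \<not> dS (p1 y) \<and> p1 (p2 y) = fS (c1S (p1 y)) \<and>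
             p2 (p2 y) = fS (c2S (pe (p1 y) (p1 (p2 y))))) hS" unfolding hS_def by (intro cmp_basic)
  show "PS x \<Longrightarrow> dS x \<Longrightarrow> fS x = bS x" for x
  proof -
    assume "PS x" "dS x"
    then obtain T k U where x: "x = pe (enc_ty T) (pe k (enc_ty U))" unfolding PS_def by blast
    show ?thesis using \<open>dS x\<close> unfolding x fS_enc by (cases T) (simp_all add: dS_def bS_def)
  qed
  show "PS x \<Longrightarrow> \<not> dS x \<Longrightarrow> PS (c1S x) \<and> muS (c1S x) < muS x \<and> PS (c2S (pe x (fS (c1S x)))) \<and>
             muS (c2S (pe x (fS (c1S x)))) < muS x \<and> fS x = hS (pe x (pe (fS (c1S x)) (fS (c2S (pe x (fS (c1S x)))))))" for x
  proof -
    assume "PS x" "\<not> dS x"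
    then obtain T k U where x: "x = pe (enc_ty T) (pe k (enc_ty U))" unfolding PS_def by blast
    show ?thesis using \<open>\<not> dS x\<close> unfolding x
      by (cases T) (auto simp: dS_def c1S_def c2S_def hS_def muS_def PS_def fS_def)
  qed
qed

lemma cmp_fS: "cmp P a \<Longrightarrow> (\<And>x. P x \<Longrightarrow> PS (a x)) \<Longrightarrow> cmp P (\<lambda>x. fS (a x))"
  by (rule cmp_comp[OF S.computable])

definition PE :: "nat \<Rightarrow> bool" where
  "PE x \<longleftrightarrow> (\<exists>\<Gamma> T. x = pe (enc_env \<Gamma>) (enc_ty T) \<and> wfE \<Gamma> \<and> wfT \<Gamma> T)"
definition fE :: "nat \<Rightarrow> nat" where "fE x = enc_ty (expose (DE (p1 x)) (DT (p2 x)))"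
definition muE :: "nat \<Rightarrow> nat" where
  "muE x = (case DT (p2 x) of TVar i \<Rightarrow> length (DE (p1 x)) - i | _ \<Rightarrow> 0)"
definition dE :: "nat \<Rightarrow> bool" where "dE x \<longleftrightarrow> p1 (p2 x) \<noteq> 1"
definition bE :: "nat \<Rightarrow> nat" where "bE x = p2 x"
definition c1E :: "nat \<Rightarrow> nat" where
  "c1E x = pe (p1 x) (fL (pe (Suc (p2 (p2 x))) (pe 0 (p2 (NTHB (p1 x) (p2 (p2 x)))))))"
definition c2E :: "nat \<Rightarrow> nat" where "c2E y = c1E (p1 y)"
definition hE :: "nat \<Rightarrow> nat" where "hE y = p1 (p2 y)"

lemma fE_enc[simp]: "fE (pe (enc_env \<Gamma>) (enc_ty T)) = enc_ty (expose \<Gamma> T)" by (simp add: fE_def)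

lemma PE_var: "PE x \<Longrightarrow> p1 (p2 x) = 1 \<Longrightarrow> \<exists>\<Gamma> i U. x = pe (enc_env \<Gamma>) (enc_ty (TVar i)) \<and> wfE \<Gamma> \<and>
   i < length \<Gamma> \<and> \<Gamma> ! i = TVarB U"
proof -
  assume "PE x" "p1 (p2 x) = 1"
  then obtain \<Gamma> T where x: "x = pe (enc_env \<Gamma>) (enc_ty T)" "wfE \<Gamma>" "wfT \<Gamma> T" unfolding PE_def by blast
  then obtain i where T: "T = TVar i" using \<open>p1 (p2 x) = 1\<close> by (cases T) auto
  then have "i < length \<Gamma>" "is_TVarB (\<Gamma> ! i)" using x by auto
  then show ?thesis using x T is_TVarB_ex by blast
qed

lemma c1E_eq: "wfE \<Gamma> \<Longrightarrow> i < length \<Gamma> \<Longrightarrow> \<Gamma> ! i = TVarB U \<Longrightarrow>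
    c1E (pe (enc_env \<Gamma>) (enc_ty (TVar i))) = pe (enc_env \<Gamma>) (enc_ty (liftT (Suc i) 0 U))"
  unfolding c1E_def using nth_TVarB_code[of \<Gamma> i "TVarB U"] by (simp del: enc_ty_pe add: enc_ty_pe(2))

lemma c1E_PL: "PE x \<Longrightarrow> p1 (p2 x) = 1 \<Longrightarrow> PL (pe (Suc (p2 (p2 x))) (pe 0 (p2 (NTHB (p1 x) (p2 (p2 x))))))"
proof -
  assume "PE x" "p1 (p2 x) = 1"
  then obtain \<Gamma> i U where x: "x = pe (enc_env \<Gamma>) (enc_ty (TVar i))" "wfE \<Gamma>" "i < length \<Gamma>" "\<Gamma> ! i = TVarB U"
    using PE_var by blast
  then show ?thesis using nth_TVarB_code[of \<Gamma> i "TVarB U"] unfolding PL_def by auto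
qed

interpretation E: scheme PE fE muE dE bE c1E c2E hE
proof
  show "cmp PE (\<lambda>x. of_bool (dE x))" unfolding dE_def by (intro cmp_basic)
  show "cmp (\<lambda>x. PE x \<and> dE x) bE" unfolding bE_def by (intro cmp_basic)
  show c1: "cmp (\<lambda>x. PE x \<and> \<not> dE x) c1E" unfolding c1E_def
    by (intro cmp_basic cmp_fL cmp_NTHB) (auto simp: dE_def intro: c1E_PL)
  show "cmp (\<lambda>y. PE (p1 y) \<and> \<not> dE (p1 y) \<and> p2 y = fE (c1E (p1 y))) c2E" unfolding c2E_def
    by (rule cmp_comp[OF c1]) (intro cmp_basic, auto)
  show "cmp (\<lambda>y. PE (p1 y) \<and> \<not> dE (p1 y) \<and> p1 (p2 y) = fE (c1E (p1 y)) \<and>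
             p2 (p2 y) = fE (c2E (pe (p1 y) (p1 (p2 y))))) hE" unfolding hE_def by (intro cmp_basic)
  show "PE x \<Longrightarrow> dE x \<Longrightarrow> fE x = bE x" for x
  proof -
    assume "PE x" "dE x"
    then obtain \<Gamma> T where x: "x = pe (enc_env \<Gamma>) (enc_ty T)" unfolding PE_def by blast
    show ?thesis using \<open>dE x\<close> unfolding x fE_enc by (cases T) (simp_all add: dE_def bE_def)
  qed
  show "PE x \<Longrightarrow> \<not> dE x \<Longrightarrow> PE (c1E x) \<and> muE (c1E x) < muE x \<and> PE (c2E (pe x (fE (c1E x)))) \<and>
             muE (c2E (pe x (fE (c1E x)))) < muE x \<and> fE x = hE (pe x (pe (fE (c1E x)) (fE (c2E (pe x (fE (c1E x)))))))" for x
  proof -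
    assume "PE x" "\<not> dE x"
    then obtain \<Gamma> i U where x: "x = pe (enc_env \<Gamma>) (enc_ty (TVar i))" "wfE \<Gamma>" "i < length \<Gamma>" "\<Gamma> ! i = TVarB U"
      using PE_var dE_def by blast
    have c: "c1E x = pe (enc_env \<Gamma>) (enc_ty (liftT (Suc i) 0 U))" using c1E_eq x by simp
    have wf: "wfT \<Gamma> (liftT (Suc i) 0 U)" using wf_lookup[OF x(2,3)] x(4) by simp
    have m: "muE (c1E x) < muE x" unfolding x(1) c1E_eq[OF x(2-4)] muE_def using lift_measure[OF x(3), of U]
      by (simp del: enc_ty_pe split: ty.splits)
    have "expose \<Gamma> (TVar i) = expose \<Gamma> (liftT (Suc i) 0 U)" using x by simp
    then show ?thesis using c wf m x unfolding PE_def c2E_def hE_def by (auto simp del: enc_ty_pe simp: fE_def)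
  qed
qed

lemma cmp_fE: "cmp P a \<Longrightarrow> (\<And>x. P x \<Longrightarrow> PE (a x)) \<Longrightarrow> cmp P (\<lambda>x. fE (a x))"
  by (rule cmp_comp[OF E.computable])


section \<open>Weights\<close>

primrec wt :: "nat list \<Rightarrow> ty \<Rightarrow> nat" where
  "wt ws Top = 1"
| "wt ws (TVar i) = (if i < length ws then ws ! i else 1)"
| "wt ws (Arr S T) = Suc (wt ws S + wt ws T)"
| "wt ws (All S T) = Suc (wt ws S + wt (2 # ws) T)"

fun cw :: "env \<Rightarrow> nat list" where
  "cw [] = []"
| "cw (VarB U # \<Gamma>) = 1 # cw \<Gamma>"
| "cw (TVarB U # \<Gamma>) = Suc (wt (cw \<Gamma>) U) # cw \<Gamma>"

lemma wt_lift: "wt (ws1 @ ws2 @ ws3) (liftT (length ws2) (length ws1) U) = wt (ws1 @ ws3) U"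
proof (induct U arbitrary: ws1)
  case (TVar i)
  then show ?case by (auto simp: nth_append)
next
  case (Arr S T)
  show ?case using Arr(1)[of ws1] Arr(2)[of ws1] by simp
next
  case (All S T)
  show ?case using All(1)[of ws1] All(2)[of "2 # ws1"] by simp
qed simp

lemma cw_len[simp]: "length (cw \<Gamma>) = length \<Gamma>"
  by (induct \<Gamma> rule: cw.induct) auto

lemma cw_drop: "drop n (cw \<Gamma>) = cw (drop n \<Gamma>)"
proof (induct \<Gamma> arbitrary: n rule: cw.induct)
  case (2 U \<Gamma>) then show ?case by (cases n) auto
next
  case (3 U \<Gamma>) then show ?case by (cases n) auto
qed simp

lemma cw_nth: "i < length \<Gamma> \<Longrightarrow> \<Gamma> ! i = TVarB U \<Longrightarrow> cw \<Gamma> ! i = Suc (wt (cw (drop (Suc i) \<Gamma>)) U)"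
proof (induct \<Gamma> arbitrary: i rule: cw.induct)
  case (2 V \<Gamma>) then show ?case by (cases i) auto
next
  case (3 V \<Gamma>) then show ?case by (cases i) auto
qed simp

lemma wt_var_lift: "i < length \<Gamma> \<Longrightarrow> \<Gamma> ! i = TVarB U \<Longrightarrow> wt (cw \<Gamma>) (liftT (Suc i) 0 U) < wt (cw \<Gamma>) (TVar i)"
proof -
  assume i: "i < length \<Gamma>" "\<Gamma> ! i = TVarB U"
  have "cw \<Gamma> = [] @ take (Suc i) (cw \<Gamma>) @ drop (Suc i) (cw \<Gamma>)" by simp
  then have "wt (cw \<Gamma>) (liftT (Suc i) 0 U) = wt ([] @ drop (Suc i) (cw \<Gamma>)) U"
    using wt_lift[of "[]" "take (Suc i) (cw \<Gamma>)" "drop (Suc i) (cw \<Gamma>)" U] i by (metis cw_len length_take list.size(3) min_absorb2 Suc_leI)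
  then show ?thesis using i cw_nth[OF i] by (simp add: cw_drop)
qed

lemma asub_Var_iff: "i < length \<Gamma> \<Longrightarrow> \<Gamma> ! i = TVarB U \<Longrightarrow> T \<noteq> Top \<Longrightarrow> T \<noteq> TVar i \<Longrightarrow>
    asub \<Gamma> (TVar i) T \<longleftrightarrow> asub \<Gamma> (liftT (Suc i) 0 U) T"
  using asub_VarE[of \<Gamma> i T] asub.A_Var[of i \<Gamma> U T] by auto

lemma asub_Arr_iff: "asub \<Gamma> (Arr S1 S2) (Arr T1 T2) \<longleftrightarrow> asub \<Gamma> T1 S1 \<and> asub \<Gamma> S2 T2"
  using asub_ArrE[of \<Gamma> S1 S2 "Arr T1 T2"] asub.A_Arr[of \<Gamma> T1 S1 S2 T2] by auto

lemma asub_All_iff: "asub \<Gamma> (All S1 S2) (All T1 T2) \<longleftrightarrow> asub \<Gamma> T1 S1 \<and> asub (TVarB Top # \<Gamma>) S2 T2"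
  using asub_AllE[of \<Gamma> S1 S2 "All T1 T2"] asub.A_All[of \<Gamma> T1 S1 S2 T2] by auto

lemma asub_false: "\<not> asub \<Gamma> Top (TVar i)" "\<not> asub \<Gamma> Top (Arr A B)" "\<not> asub \<Gamma> Top (All A B)"
  "\<not> asub \<Gamma> (Arr S1 S2) (TVar i)" "\<not> asub \<Gamma> (Arr S1 S2) (All A B)"
  "\<not> asub \<Gamma> (All S1 S2) (TVar i)" "\<not> asub \<Gamma> (All S1 S2) (Arr A B)"
  using asub_TopE asub_ArrE asub_AllE by blast+

section \<open>Deciding algorithmic subtyping\<close>

definition PA :: "nat \<Rightarrow> bool" where
  "PA x \<longleftrightarrow> (\<exists>\<Gamma> S T. x = pe (enc_env \<Gamma>) (pe (enc_ty S) (enc_ty T)) \<and> wfE \<Gamma> \<and> wfT \<Gamma> S \<and> wfT \<Gamma> T)"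
definition fA :: "nat \<Rightarrow> nat" where "fA x = of_bool (asub (DE (p1 x)) (DT (p1 (p2 x))) (DT (p2 (p2 x))))"
definition muA :: "nat \<Rightarrow> nat" where
  "muA x = wt (cw (DE (p1 x))) (DT (p1 (p2 x))) + wt (cw (DE (p1 x))) (DT (p2 (p2 x)))"
definition dA :: "nat \<Rightarrow> bool" where
  "dA x \<longleftrightarrow> p1 (p2 (p2 x)) = 0 \<or> (p1 (p1 (p2 x)) = 1 \<and> p1 (p2 x) = p2 (p2 x)) \<or>
     \<not> (p1 (p1 (p2 x)) = 1 \<or> (p1 (p1 (p2 x)) = 2 \<and> p1 (p2 (p2 x)) = 2) \<or> (p1 (p1 (p2 x)) = 3 \<and> p1 (p2 (p2 x)) = 3))"
definition bA :: "nat \<Rightarrow> nat" where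
  "bA x = of_bool (p1 (p2 (p2 x)) = 0 \<or> (p1 (p1 (p2 x)) = 1 \<and> p1 (p2 x) = p2 (p2 x)))"
definition c1A :: "nat \<Rightarrow> nat" where
  "c1A x = (if p1 (p1 (p2 x)) = 1
     then pe (p1 x) (pe (fL (pe (Suc (p2 (p1 (p2 x)))) (pe 0 (p2 (NTHB (p1 x) (p2 (p1 (p2 x)))))))) (p2 (p2 x)))
     else pe (p1 x) (pe (p1 (p2 (p2 (p2 x)))) (p1 (p2 (p1 (p2 x))))))"
definition c2A :: "nat \<Rightarrow> nat" where
  "c2A y = (if p1 (p1 (p2 (p1 y))) = 1 then c1A (p1 y)
     else if p1 (p1 (p2 (p1 y))) = 2 then pe (p1 (p1 y)) (pe (p2 (p2 (p1 (p2 (p1 y))))) (p2 (p2 (p2 (p2 (p1 y))))))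
     else pe (Suc (pe (pe 1 (pe 0 0)) (p1 (p1 y)))) (pe (p2 (p2 (p1 (p2 (p1 y))))) (p2 (p2 (p2 (p2 (p1 y)))))))"
definition hA :: "nat \<Rightarrow> nat" where
  "hA y = (if p1 (p1 (p2 (p1 y))) = 1 then p1 (p2 y) else p1 (p2 y) * p2 (p2 y))"

lemma fA_enc[simp]: "fA (pe (enc_env \<Gamma>) (pe (enc_ty S) (enc_ty T))) = of_bool (asub \<Gamma> S T)"
  by (simp add: fA_def)

lemma PA_var: "PA x \<Longrightarrow> p1 (p1 (p2 x)) = 1 \<Longrightarrow> \<exists>\<Gamma> i U T. x = pe (enc_env \<Gamma>) (pe (enc_ty (TVar i)) (enc_ty T)) \<and>
   wfE \<Gamma> \<and> wfT \<Gamma> T \<and> i < length \<Gamma> \<and> \<Gamma> ! i = TVarB U"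
proof -
  assume "PA x" "p1 (p1 (p2 x)) = 1"
  then obtain \<Gamma> S T where x: "x = pe (enc_env \<Gamma>) (pe (enc_ty S) (enc_ty T))" "wfE \<Gamma>" "wfT \<Gamma> S" "wfT \<Gamma> T"
    unfolding PA_def by blast
  then obtain i where S: "S = TVar i" using \<open>p1 (p1 (p2 x)) = 1\<close> by (cases S) auto
  then have "i < length \<Gamma>" "is_TVarB (\<Gamma> ! i)" using x by auto
  then show ?thesis using x S is_TVarB_ex by blast
qed

lemma c1A_PL: "PA x \<Longrightarrow> p1 (p1 (p2 x)) = 1 \<Longrightarrow> PL (pe (Suc (p2 (p1 (p2 x)))) (pe 0 (p2 (NTHB (p1 x) (p2 (p1 (p2 x)))))))"
proof -
  assume "PA x" "p1 (p1 (p2 x)) = 1"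
  then obtain \<Gamma> i U T where x: "x = pe (enc_env \<Gamma>) (pe (enc_ty (TVar i)) (enc_ty T))" "wfE \<Gamma>" "i < length \<Gamma>" "\<Gamma> ! i = TVarB U"
    using PA_var by blast
  then show ?thesis using nth_TVarB_code[of \<Gamma> i "TVarB U"] unfolding PL_def by auto
qed

lemma c1A_var: "wfE \<Gamma> \<Longrightarrow> i < length \<Gamma> \<Longrightarrow> \<Gamma> ! i = TVarB U \<Longrightarrow>
    c1A (pe (enc_env \<Gamma>) (pe (enc_ty (TVar i)) (enc_ty T))) = pe (enc_env \<Gamma>) (pe (enc_ty (liftT (Suc i) 0 U)) (enc_ty T))"
  unfolding c1A_def using nth_TVarB_code[of \<Gamma> i "TVarB U"] by (simp del: enc_ty_pe add: enc_ty_pe(2))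

lemma cc1A: "cmp (\<lambda>x. PA x \<and> \<not> dA x) c1A"
  unfolding c1A_def by (intro cmp_basic cmp_fL cmp_NTHB) (auto intro: c1A_PL)

interpretation A: scheme PA fA muA dA bA c1A c2A hA
proof
  show "cmp PA (\<lambda>x. of_bool (dA x))" unfolding dA_def by (intro cmp_basic)
  show "cmp (\<lambda>x. PA x \<and> dA x) bA" unfolding bA_def by (intro cmp_basic)
  show "cmp (\<lambda>x. PA x \<and> \<not> dA x) c1A" by (rule cc1A)
  show "cmp (\<lambda>y. PA (p1 y) \<and> \<not> dA (p1 y) \<and> p2 y = fA (c1A (p1 y))) c2A" unfolding c2A_def
    by (intro cmp_basic cmp_comp[OF cc1A]) auto
  show "cmp (\<lambda>y. PA (p1 y) \<and> \<not> dA (p1 y) \<and> p1 (p2 y) = fA (c1A (p1 y)) \<and>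
             p2 (p2 y) = fA (c2A (pe (p1 y) (p1 (p2 y))))) hA" unfolding hA_def by (intro cmp_basic)
  show "PA x \<Longrightarrow> dA x \<Longrightarrow> fA x = bA x" for x
  proof -
    assume "PA x" "dA x"
    then obtain \<Gamma> S T where x: "x = pe (enc_env \<Gamma>) (pe (enc_ty S) (enc_ty T))" unfolding PA_def by blast
    show ?thesis using \<open>dA x\<close> unfolding x fA_enc
      by (cases S; cases T) (auto simp: dA_def bA_def asub_false asub.A_Top asub.A_Refl)
  qed
  show "PA x \<Longrightarrow> \<not> dA x \<Longrightarrow> PA (c1A x) \<and> muA (c1A x) < muA x \<and> PA (c2A (pe x (fA (c1A x)))) \<and>
             muA (c2A (pe x (fA (c1A x)))) < muA x \<and> fA x = hA (pe x (pe (fA (c1A x)) (fA (c2A (pe x (fA (c1A x)))))))" for x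
  proof -
    assume P: "PA x" and nd: "\<not> dA x"
    then obtain \<Gamma> S T where x: "x = pe (enc_env \<Gamma>) (pe (enc_ty S) (enc_ty T))" "wfE \<Gamma>" "wfT \<Gamma> S" "wfT \<Gamma> T"
      unfolding PA_def by blast
    show ?thesis
    proof (cases S)
      case (TVar i)
      then obtain U where U: "i < length \<Gamma>" "\<Gamma> ! i = TVarB U" using x is_TVarB_ex by auto
      have T: "T \<noteq> Top" "T \<noteq> TVar i" using nd unfolding x(1) TVar by (auto simp: dA_def)
      have c: "c1A x = pe (enc_env \<Gamma>) (pe (enc_ty (liftT (Suc i) 0 U)) (enc_ty T))"
        unfolding x(1) TVar by (rule c1A_var[OF x(2) U])
      have c2: "c2A (pe x r) = c1A x" for r unfolding x(1) TVar c2A_def by (simp del: c1A_def)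
      have wf: "wfT \<Gamma> (liftT (Suc i) 0 U)" using wf_lookup[OF x(2) U(1)] U(2) by simp
      have m: "muA (c1A x) < muA x" unfolding c unfolding x(1) TVar muA_def
        using wt_var_lift[OF U] by (simp del: enc_ty_pe add: DT_enc)
      have h: "hA y = p1 (p2 y)" if "p1 y = x" for y unfolding hA_def using that x(1) TVar by simp
      have e: "fA x = fA (c1A x)" unfolding c unfolding x(1) TVar fA_enc using asub_Var_iff[OF U T] by simp
      show ?thesis using c c2 wf m h e x unfolding PA_def by (auto simp del: enc_ty_pe)
    next
      case (Arr S1 S2)
      then obtain T1 T2 where T: "T = Arr T1 T2" using nd unfolding x(1) by (cases T) (auto simp: dA_def)
      have c: "c1A x = pe (enc_env \<Gamma>) (pe (enc_ty T1) (enc_ty S1))" unfolding x(1) Arr T c1A_def by simp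
      have c2: "c2A (pe x r) = pe (enc_env \<Gamma>) (pe (enc_ty S2) (enc_ty T2))" for r unfolding x(1) Arr T c2A_def by simp
      show ?thesis using c c2 x unfolding PA_def hA_def muA_def Arr T by (auto simp: asub_Arr_iff fA_def)
    next
      case (All S1 S2)
      then obtain T1 T2 where T: "T = All T1 T2" using nd unfolding x(1) by (cases T) (auto simp: dA_def)
      have c: "c1A x = pe (enc_env \<Gamma>) (pe (enc_ty T1) (enc_ty S1))" unfolding x(1) All T c1A_def by simp
      have c2: "c2A (pe x r) = pe (enc_env (TVarB Top # \<Gamma>)) (pe (enc_ty S2) (enc_ty T2))" for r
        unfolding x(1) All T c2A_def by simp
      have wf: "wfT (TVarB Top # \<Gamma>) S2" "wfT (TVarB Top # \<Gamma>) T2"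
        using x All T wfT_cong[of "TVarB S1 # \<Gamma>" "TVarB Top # \<Gamma>" S2] wfT_cong[of "TVarB T1 # \<Gamma>" "TVarB Top # \<Gamma>" T2] by auto
      have cwT: "cw (TVarB Top # \<Gamma>) = 2 # cw \<Gamma>" by simp
      have p1: "PA (c1A x)" using c x All T unfolding PA_def by auto
      have p2: "PA (c2A (pe x r))" for r unfolding c2 PA_def using wf x(2)
        by (intro exI[of _ "TVarB Top # \<Gamma>"] exI[of _ S2] exI[of _ T2]) simp
      have m1: "muA (c1A x) < muA x" unfolding c unfolding x(1) All T muA_def by (simp del: enc_ty_pe add: DT_enc)
      have m2: "muA (c2A (pe x r)) < muA x" for r unfolding c2 unfolding x(1) All T muA_def
        by (simp del: enc_ty_pe enc_env_simps cw.simps add: DT_enc DE_enc cwT)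
      have e: "fA x = hA (pe x (pe (fA (c1A x)) (fA (c2A (pe x r)))))" for r
        unfolding c2 c hA_def unfolding x(1) All T
        by (simp del: enc_ty_pe enc_env_simps add: asub_All_iff) (simp add: fA_def)
      show ?thesis using p1 p2 m1 m2 e by blast
    next
      case Top
      then show ?thesis using nd unfolding x(1) by (auto simp: dA_def)
    qed
  qed
qed

lemma cmp_fA: "cmp P a \<Longrightarrow> (\<And>x. P x \<Longrightarrow> PA (a x)) \<Longrightarrow> cmp P (\<lambda>x. fA (a x))"
  by (rule cmp_comp[OF A.computable])


primrec tsz :: "trm \<Rightarrow> nat" where
  "tsz TopT = 1" | "tsz (Var i) = 1" | "tsz (Abs S t) = Suc (tsz t)" | "tsz (TAbs S t) = Suc (tsz t)"
| "tsz (App s t) = Suc (tsz s + tsz t)" | "tsz (TApp t S) = Suc (tsz t)"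

lemma tsz_pos: "0 < tsz t" by (cases t) auto

abbreviation xG :: "nat \<Rightarrow> nat" where "xG x \<equiv> p1 (p2 x)"
abbreviation xM :: "nat \<Rightarrow> nat" where "xM x \<equiv> p1 (p2 (p2 x))"
abbreviation xC :: "nat \<Rightarrow> nat" where "xC x \<equiv> p2 (p2 (p2 x))"
abbreviation xmt :: "nat \<Rightarrow> nat" where "xmt x \<equiv> p1 (p1 (p2 (p2 x)))"
abbreviation xma :: "nat \<Rightarrow> nat" where "xma x \<equiv> p2 (p1 (p2 (p2 x)))"

definition PC :: "nat \<Rightarrow> bool" where
  "PC x \<longleftrightarrow> (\<exists>\<Gamma> t T. wfE \<Gamma> \<and> wf_trm \<Gamma> t \<and> beta_normal t \<and>
     ((wfT \<Gamma> T \<and> x = pe 0 (pe (enc_env \<Gamma>) (pe (enc_trm t) (enc_ty T)))) \<or> x = pe 1 (pe (enc_env \<Gamma>) (pe (enc_trm t) 0))))"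

definition fC :: "nat \<Rightarrow> nat" where
  "fC x = (if p1 x = 0 then of_bool (DE (xG x) \<turnstile>\<^sub>t DM (xM x) : DT (xC x))
           else (case synth (DE (xG x)) (DM (xM x)) of None \<Rightarrow> 0 | Some M \<Rightarrow> Suc (enc_ty M)))"

definition muC :: "nat \<Rightarrow> nat" where "muC x = 2 * tsz (DM (xM x)) + (if p1 x = 0 then 1 else 0)"

definition dC :: "nat \<Rightarrow> bool" where "dC x \<longleftrightarrow> p1 x \<noteq> 0 \<and> xmt x < 4"

definition bC :: "nat \<Rightarrow> nat" where
  "bC x = (if xmt x = 0 then Suc (pe 0 0) else if xmt x = 1 then Suc (fL (pe (Suc (xma x)) (pe 0 (p2 (NTHB (xG x) (xma x))))))
           else 0)"

definition c1C :: "nat \<Rightarrow> nat" where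
  "c1C x = (if p1 x = 0 then
     (if xmt x = 2 then pe 0 (pe (Suc (pe (pe 0 (p1 (xma x))) (xG x)))
          (pe (p2 (xma x)) (if p1 (xC x) = 2 then fL (pe 1 (pe 0 (p2 (p2 (xC x))))) else pe 0 0)))
      else if xmt x = 3 then pe 0 (pe (Suc (pe (pe 1 (p1 (xma x))) (xG x)))
          (pe (p2 (xma x)) (if p1 (xC x) = 3 then p2 (p2 (xC x)) else pe 0 0)))
      else pe 1 (pe (xG x) (pe (xM x) 0)))
   else pe 1 (pe (xG x) (pe (p1 (xma x)) 0)))"

definition c2C :: "nat \<Rightarrow> nat" where
  "c2C y = (if p1 (p1 y) \<noteq> 0 \<and> xmt (p1 y) = 4 \<and> p2 y \<noteq> 0 then
      (if p1 (fE (pe (xG (p1 y)) (p2 y - 1))) = 2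
       then pe 0 (pe (xG (p1 y)) (pe (p2 (xma (p1 y))) (p1 (p2 (fE (pe (xG (p1 y)) (p2 y - 1)))))))
       else c1C (p1 y))
    else c1C (p1 y))"

definition hC :: "nat \<Rightarrow> nat" where
  "hC y = (if p1 (p1 y) = 0 then
     (if xmt (p1 y) = 2 then
        (if p1 (xC (p1 y)) = 0 then p1 (p2 y)
         else if p1 (xC (p1 y)) = 2 then fA (pe (xG (p1 y)) (pe (p1 (p2 (xC (p1 y)))) (p1 (xma (p1 y))))) * p1 (p2 y)
         else 0)
      else if xmt (p1 y) = 3 then
        (if p1 (xC (p1 y)) = 0 then p1 (p2 y)
         else if p1 (xC (p1 y)) = 3 then fA (pe (xG (p1 y)) (pe (p1 (p2 (xC (p1 y)))) (p1 (xma (p1 y))))) * p1 (p2 y)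
         else 0)
      else if p1 (p2 y) = 0 then 0 else fA (pe (xG (p1 y)) (pe (p1 (p2 y) - 1) (xC (p1 y)))))
   else if xmt (p1 y) = 4 then
     (if p1 (p2 y) = 0 then 0
      else if p1 (fE (pe (xG (p1 y)) (p1 (p2 y) - 1))) = 2 then
        (if p2 (p2 y) = 1 then Suc (p2 (p2 (fE (pe (xG (p1 y)) (p1 (p2 y) - 1))))) else 0)
      else 0)
   else
     (if p1 (p2 y) = 0 then 0
      else if p1 (fE (pe (xG (p1 y)) (p1 (p2 y) - 1))) = 3 then
        (if fA (pe (xG (p1 y)) (pe (p2 (xma (p1 y))) (p1 (p2 (fE (pe (xG (p1 y)) (p1 (p2 y) - 1))))))) = 1
         then Suc (fS (pe (p2 (p2 (fE (pe (xG (p1 y)) (p1 (p2 y) - 1))))) (pe 0 (p2 (xma (p1 y))))))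
         else 0)
      else 0))"

lemma PC0: "PC x \<Longrightarrow> p1 x = 0 \<Longrightarrow> \<exists>\<Gamma> t T. x = pe 0 (pe (enc_env \<Gamma>) (pe (enc_trm t) (enc_ty T))) \<and>
    wfE \<Gamma> \<and> wf_trm \<Gamma> t \<and> beta_normal t \<and> wfT \<Gamma> T"
  unfolding PC_def by auto

lemma PC1: "PC x \<Longrightarrow> p1 x \<noteq> 0 \<Longrightarrow> \<exists>\<Gamma> t. x = pe 1 (pe (enc_env \<Gamma>) (pe (enc_trm t) 0)) \<and>
    wfE \<Gamma> \<and> wf_trm \<Gamma> t \<and> beta_normal t"
  unfolding PC_def by auto

lemma synth_wf: "wfE \<Gamma> \<Longrightarrow> wf_trm \<Gamma> t \<Longrightarrow> synth \<Gamma> t = Some M \<Longrightarrow> wfT \<Gamma> M"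
  using typing_wf[OF synth_sound] by blast

lemma PC1_nd: "PC x \<Longrightarrow> p1 x \<noteq> 0 \<Longrightarrow> \<not> dC x \<Longrightarrow> \<exists>\<Gamma> s a. wfE \<Gamma> \<and> wf_trm \<Gamma> s \<and> beta_normal s \<and>
   xG x = enc_env \<Gamma> \<and> c1C x = pe 1 (pe (enc_env \<Gamma>) (pe (enc_trm s) 0)) \<and>
   ((\<exists>u. wf_trm \<Gamma> u \<and> beta_normal u \<and> (\<forall>S v. s \<noteq> Abs S v) \<and> x = pe 1 (pe (enc_env \<Gamma>) (pe (enc_trm (App s u)) 0)) \<and> a = u) \<or>
    (\<exists>S'. wfT \<Gamma> S' \<and> (\<forall>S v. s \<noteq> TAbs S v) \<and> x = pe 1 (pe (enc_env \<Gamma>) (pe (enc_trm (TApp s S')) 0))))"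
proof -
  assume P: "PC x" "p1 x \<noteq> 0" "\<not> dC x"
  then obtain \<Gamma> t where x: "x = pe 1 (pe (enc_env \<Gamma>) (pe (enc_trm t) 0))" "wfE \<Gamma>" "wf_trm \<Gamma> t" "beta_normal t"
    using PC1 by blast
  show ?thesis
  proof (cases t)
    case (App s u)
    then show ?thesis using x P(3) by (auto simp: dC_def c1C_def simp del: enc_trm_pe) (auto simp: c1C_def)
  next
    case (TApp s S')
    then show ?thesis using x P(3) by (auto simp: dC_def c1C_def simp del: enc_trm_pe) (auto simp: c1C_def)
  qed (use x P(3) in \<open>auto simp: dC_def\<close>)
qed


lemma fC_0: "fC (pe 0 (pe (enc_env \<Gamma>) (pe (enc_trm t) (enc_ty T)))) = of_bool (\<Gamma> \<turnstile>\<^sub>t t : T)"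
  by (simp add: fC_def)
lemma fC_1: "fC (pe 1 (pe (enc_env \<Gamma>) (pe (enc_trm t) 0))) = (case synth \<Gamma> t of None \<Rightarrow> 0 | Some M \<Rightarrow> Suc (enc_ty M))"
  by (simp add: fC_def)
lemma muC_0: "muC (pe 0 (pe g (pe (enc_trm t) c))) = 2 * tsz t + 1" by (simp add: muC_def)
lemma muC_1: "muC (pe 1 (pe g (pe (enc_trm t) c))) = 2 * tsz t" by (simp add: muC_def)

lemma c1C_Abs: "c1C (pe 0 (pe (enc_env \<Gamma>) (pe (enc_trm (Abs S u)) (enc_ty T)))) =
   pe 0 (pe (enc_env (VarB S # \<Gamma>)) (pe (enc_trm u) (enc_ty (case T of Arr T1 T2 \<Rightarrow> liftT 1 0 T2 | _ \<Rightarrow> Top))))"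
  by (cases T) (simp_all add: c1C_def)
lemma c1C_TAbs: "c1C (pe 0 (pe (enc_env \<Gamma>) (pe (enc_trm (TAbs S u)) (enc_ty T)))) =
   pe 0 (pe (enc_env (TVarB S # \<Gamma>)) (pe (enc_trm u) (enc_ty (case T of All T1 T2 \<Rightarrow> T2 | _ \<Rightarrow> Top))))"
  by (cases T) (simp_all add: c1C_def)
lemma c1C_other: "(\<forall>S u. t \<noteq> Abs S u \<and> t \<noteq> TAbs S u) \<Longrightarrow>
   c1C (pe 0 (pe (enc_env \<Gamma>) (pe (enc_trm t) (enc_ty T)))) = pe 1 (pe (enc_env \<Gamma>) (pe (enc_trm t) 0))"
  by (cases t) (simp_all add: c1C_def)
lemma c1C_App: "c1C (pe 1 (pe (enc_env \<Gamma>) (pe (enc_trm (App s u)) 0))) = pe 1 (pe (enc_env \<Gamma>) (pe (enc_trm s) 0))"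
  by (simp add: c1C_def)
lemma c1C_TApp: "c1C (pe 1 (pe (enc_env \<Gamma>) (pe (enc_trm (TApp s S)) 0))) = pe 1 (pe (enc_env \<Gamma>) (pe (enc_trm s) 0))"
  by (simp add: c1C_def)
lemma c2C_0: "p1 x = 0 \<Longrightarrow> c2C (pe x r) = c1C x" by (simp add: c2C_def)
lemma c2C_TApp: "c2C (pe (pe 1 (pe g (pe (enc_trm (TApp s S)) 0))) r) = c1C (pe 1 (pe g (pe (enc_trm (TApp s S)) 0)))"
  by (simp add: c2C_def)
lemma c2C_App: "c2C (pe (pe 1 (pe (enc_env \<Gamma>) (pe (enc_trm (App s u)) 0))) (Suc (enc_ty M))) =
   (case expose \<Gamma> M of Arr A B \<Rightarrow> pe 0 (pe (enc_env \<Gamma>) (pe (enc_trm u) (enc_ty A)))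
     | _ \<Rightarrow> pe 1 (pe (enc_env \<Gamma>) (pe (enc_trm s) 0)))"
  by (cases "expose \<Gamma> M") (simp_all add: c2C_def c1C_def fE_def)
lemma c2C_App0: "c2C (pe (pe 1 (pe (enc_env \<Gamma>) (pe (enc_trm (App s u)) 0))) 0) = pe 1 (pe (enc_env \<Gamma>) (pe (enc_trm s) 0))"
  by (simp add: c2C_def c1C_def)

lemma hC_Abs: "hC (pe (pe 0 (pe (enc_env \<Gamma>) (pe (enc_trm (Abs S u)) (enc_ty T)))) (pe r1 r2)) =
   (case T of Top \<Rightarrow> r1 | Arr T1 T2 \<Rightarrow> of_bool (asub \<Gamma> T1 S) * r1 | _ \<Rightarrow> 0)"
  by (cases T) (simp_all add: hC_def fA_def)
lemma hC_TAbs: "hC (pe (pe 0 (pe (enc_env \<Gamma>) (pe (enc_trm (TAbs S u)) (enc_ty T)))) (pe r1 r2)) =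
   (case T of Top \<Rightarrow> r1 | All T1 T2 \<Rightarrow> of_bool (asub \<Gamma> T1 S) * r1 | _ \<Rightarrow> 0)"
  by (cases T) (simp_all add: hC_def fA_def)
lemma hC_other: "(\<forall>S u. t \<noteq> Abs S u \<and> t \<noteq> TAbs S u) \<Longrightarrow>
   hC (pe (pe 0 (pe (enc_env \<Gamma>) (pe (enc_trm t) (enc_ty T)))) (pe r1 r2)) =
   (if r1 = 0 then 0 else of_bool (asub \<Gamma> (DT (r1 - 1)) T))"
  by (cases t) (simp_all add: hC_def fA_def)
lemma hC_App: "hC (pe (pe 1 (pe (enc_env \<Gamma>) (pe (enc_trm (App s u)) 0))) (pe r1 r2)) =
   (if r1 = 0 then 0 else case expose \<Gamma> (DT (r1 - 1)) of Arr A B \<Rightarrow> (if r2 = 1 then Suc (enc_ty B) else 0) | _ \<Rightarrow> 0)"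
  by (cases "expose \<Gamma> (DT (r1 - 1))") (simp_all add: hC_def fE_def)
lemma hC_TApp: "hC (pe (pe 1 (pe (enc_env \<Gamma>) (pe (enc_trm (TApp s S')) 0))) (pe r1 r2)) =
   (if r1 = 0 then 0 else case expose \<Gamma> (DT (r1 - 1)) of All A B \<Rightarrow>
      (if asub \<Gamma> S' A then Suc (enc_ty (substT B 0 S')) else 0) | _ \<Rightarrow> 0)"
  by (cases "expose \<Gamma> (DT (r1 - 1))") (simp_all add: hC_def fE_def fA_def fS_def)


definition FR :: "nat \<Rightarrow> bool" where
  "FR x \<longleftrightarrow> PC (c1C x) \<and> muC (c1C x) < muC x \<and> PC (c2C (pe x (fC (c1C x)))) \<and>
     muC (c2C (pe x (fC (c1C x)))) < muC x \<and> fC x = hC (pe x (pe (fC (c1C x)) (fC (c2C (pe x (fC (c1C x)))))))"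

lemma PC_0I: "wfE \<Gamma> \<Longrightarrow> wf_trm \<Gamma> t \<Longrightarrow> beta_normal t \<Longrightarrow> wfT \<Gamma> T \<Longrightarrow> PC (pe 0 (pe (enc_env \<Gamma>) (pe (enc_trm t) (enc_ty T))))"
  unfolding PC_def by blast
lemma PC_1I: "wfE \<Gamma> \<Longrightarrow> wf_trm \<Gamma> t \<Longrightarrow> beta_normal t \<Longrightarrow> PC (pe 1 (pe (enc_env \<Gamma>) (pe (enc_trm t) 0)))"
  unfolding PC_def by blast

lemma fr_Abs:
  assumes wf: "wfE \<Gamma>" "wf_trm \<Gamma> (Abs S u)" "beta_normal (Abs S u)" "wfT \<Gamma> T"
  shows "FR (pe 0 (pe (enc_env \<Gamma>) (pe (enc_trm (Abs S u)) (enc_ty T))))"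
proof -
  define Ts where "Ts = (case T of Arr T1 T2 \<Rightarrow> liftT 1 0 T2 | _ \<Rightarrow> Top)"
  define x where "x = pe 0 (pe (enc_env \<Gamma>) (pe (enc_trm (Abs S u)) (enc_ty T)))"
  have c: "c1C x = pe 0 (pe (enc_env (VarB S # \<Gamma>)) (pe (enc_trm u) (enc_ty Ts)))"
    unfolding x_def Ts_def by (rule c1C_Abs)
  have wE: "wfE (VarB S # \<Gamma>)" using wf by simp
  have wTs: "wfT (VarB S # \<Gamma>) Ts" unfolding Ts_def using wf(4) wfT_lift0[of \<Gamma> _ "[VarB S]"]
    by (cases T) simp_all
  have P: "PC (c1C x)" unfolding c by (rule PC_0I[OF wE _ _ wTs]) (use wf in simp_all)
  have m: "muC (c1C x) < muC x" unfolding c unfolding x_def muC_0 by (simp del: enc_trm_pe)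
  have c2: "c2C (pe x r) = c1C x" for r by (rule c2C_0) (simp add: x_def)
  have e: "fC x = hC (pe x (pe (fC (c1C x)) r))" for r
    unfolding c unfolding x_def fC_0 hC_Abs using check_Abs[of \<Gamma> S T u] wf
    by (cases T) (auto simp: Ts_def)
  show ?thesis unfolding FR_def x_def[symmetric] c2 using P m e by blast
qed

lemma fr_TAbs:
  assumes wf: "wfE \<Gamma>" "wf_trm \<Gamma> (TAbs S u)" "beta_normal (TAbs S u)" "wfT \<Gamma> T"
  shows "FR (pe 0 (pe (enc_env \<Gamma>) (pe (enc_trm (TAbs S u)) (enc_ty T))))"
proof -
  define Ts where "Ts = (case T of All T1 T2 \<Rightarrow> T2 | _ \<Rightarrow> Top)"
  define x where "x = pe 0 (pe (enc_env \<Gamma>) (pe (enc_trm (TAbs S u)) (enc_ty T)))"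
  have c: "c1C x = pe 0 (pe (enc_env (TVarB S # \<Gamma>)) (pe (enc_trm u) (enc_ty Ts)))"
    unfolding x_def Ts_def by (rule c1C_TAbs)
  have wE: "wfE (TVarB S # \<Gamma>)" using wf by simp
  have wTs: "wfT (TVarB S # \<Gamma>) Ts" unfolding Ts_def
  proof (cases T)
    case (All T1 T2) then show "wfT (TVarB S # \<Gamma>) (case T of All T1 T2 \<Rightarrow> T2 | _ \<Rightarrow> Top)"
      using wf(4) wfT_cong[of "TVarB T1 # \<Gamma>" "TVarB S # \<Gamma>" T2] by simp
  qed simp_all
  have P: "PC (c1C x)" unfolding c by (rule PC_0I[OF wE _ _ wTs]) (use wf in simp_all)
  have m: "muC (c1C x) < muC x" unfolding c unfolding x_def muC_0 by (simp del: enc_trm_pe)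
  have c2: "c2C (pe x r) = c1C x" for r by (rule c2C_0) (simp add: x_def)
  have e: "fC x = hC (pe x (pe (fC (c1C x)) r))" for r
    unfolding c unfolding x_def fC_0 hC_TAbs using check_TAbs[of \<Gamma> S T u] wf
    by (cases T) (auto simp: Ts_def)
  show ?thesis unfolding FR_def x_def[symmetric] c2 using P m e by blast
qed

lemma fr_other:
  assumes wf: "wfE \<Gamma>" "wf_trm \<Gamma> t" "beta_normal t" "wfT \<Gamma> T" and na: "\<forall>S u. t \<noteq> Abs S u \<and> t \<noteq> TAbs S u"
  shows "FR (pe 0 (pe (enc_env \<Gamma>) (pe (enc_trm t) (enc_ty T))))"
proof -
  define x where "x = pe 0 (pe (enc_env \<Gamma>) (pe (enc_trm t) (enc_ty T)))"
  have c: "c1C x = pe 1 (pe (enc_env \<Gamma>) (pe (enc_trm t) 0))" unfolding x_def by (rule c1C_other[OF na])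
  have P: "PC (c1C x)" unfolding c by (rule PC_1I[OF wf(1-3)])
  have m: "muC (c1C x) < muC x" unfolding c unfolding x_def muC_0 muC_1 by simp
  have c2: "c2C (pe x r) = c1C x" for r by (rule c2C_0) (simp add: x_def)
  have e: "fC x = hC (pe x (pe (fC (c1C x)) r))" for r
    unfolding c unfolding x_def fC_0 fC_1 hC_other[OF na] using check_other[OF wf(1,2,4,3) na]
    by (cases "synth \<Gamma> t") auto
  show ?thesis unfolding FR_def x_def[symmetric] c2 using P m e by blast
qed

lemma fr_App:
  assumes wf: "wfE \<Gamma>" "wf_trm \<Gamma> (App s u)" "beta_normal (App s u)"
  shows "FR (pe 1 (pe (enc_env \<Gamma>) (pe (enc_trm (App s u)) 0)))"
proof -
  define x where "x = pe 1 (pe (enc_env \<Gamma>) (pe (enc_trm (App s u)) 0))"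
  have c: "c1C x = pe 1 (pe (enc_env \<Gamma>) (pe (enc_trm s) 0))" unfolding x_def by (rule c1C_App)
  have P: "PC (c1C x)" unfolding c by (rule PC_1I) (use wf in simp_all)
  have m: "muC (c1C x) < muC x" unfolding c unfolding x_def muC_1 by simp
  have r1: "fC (c1C x) = (case synth \<Gamma> s of None \<Rightarrow> 0 | Some M \<Rightarrow> Suc (enc_ty M))" unfolding c by (rule fC_1)
  show ?thesis
  proof (cases "synth \<Gamma> s")
    case None
    have c20: "c2C (pe x 0) = c1C x" unfolding x_def c1C_App by (rule c2C_App0)
    have c2: "c2C (pe x (fC (c1C x))) = c1C x" unfolding r1 None using c20 by simp
    have e: "fC x = hC (pe x (pe (fC (c1C x)) r))" for r
      unfolding r1 None unfolding x_def fC_1 hC_App by (simp add: None)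
    show ?thesis unfolding FR_def x_def[symmetric] c2 using P m e by simp
  next
    case (Some M)
    have wM: "wfT \<Gamma> M" using synth_wf[OF wf(1) _ Some] wf(2) by simp
    show ?thesis
    proof (cases "expose \<Gamma> M")
      case (Arr A B)
      have wA: "wfT \<Gamma> A" using expose_wf[OF wf(1) wM] Arr by simp
      have c2: "c2C (pe x (fC (c1C x))) = pe 0 (pe (enc_env \<Gamma>) (pe (enc_trm u) (enc_ty A)))"
        unfolding r1 Some unfolding x_def using c2C_App[of \<Gamma> s u M] Arr by (simp del: enc_trm_pe)
      have P2: "PC (c2C (pe x (fC (c1C x))))" unfolding c2 by (rule PC_0I[OF wf(1) _ _ wA]) (use wf in simp_all)
      have m2: "muC (c2C (pe x (fC (c1C x)))) < muC x" unfolding c2 unfolding x_def muC_0 muC_1 by simp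
      have e: "fC x = hC (pe x (pe (fC (c1C x)) (fC (c2C (pe x (fC (c1C x)))))))"
        unfolding c2 fC_0 unfolding r1 Some unfolding x_def fC_1 hC_App by (simp add: Some Arr)
      show ?thesis unfolding FR_def x_def[symmetric] using P m P2 m2 e by blast
    next
      case TVar
      have c2: "c2C (pe x (fC (c1C x))) = c1C x"
        unfolding r1 Some unfolding c unfolding x_def using c2C_App[of \<Gamma> s u M] TVar by (simp del: enc_trm_pe)
      have e: "fC x = hC (pe x (pe (fC (c1C x)) r))" for r
        unfolding r1 Some unfolding x_def fC_1 hC_App by (simp add: Some TVar)
      show ?thesis unfolding FR_def x_def[symmetric] c2 using P m e by simp
    next
      case Top
      have c2: "c2C (pe x (fC (c1C x))) = c1C x"
        unfolding r1 Some unfolding c unfolding x_def using c2C_App[of \<Gamma> s u M] Top by (simp del: enc_trm_pe)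
      have e: "fC x = hC (pe x (pe (fC (c1C x)) r))" for r
        unfolding r1 Some unfolding x_def fC_1 hC_App by (simp add: Some Top)
      show ?thesis unfolding FR_def x_def[symmetric] c2 using P m e by simp
    next
      case All
      have c2: "c2C (pe x (fC (c1C x))) = c1C x"
        unfolding r1 Some unfolding c unfolding x_def using c2C_App[of \<Gamma> s u M] All by (simp del: enc_trm_pe)
      have e: "fC x = hC (pe x (pe (fC (c1C x)) r))" for r
        unfolding r1 Some unfolding x_def fC_1 hC_App by (simp add: Some All)
      show ?thesis unfolding FR_def x_def[symmetric] c2 using P m e by simp
    qed
  qed
qed

lemma fr_TApp:
  assumes wf: "wfE \<Gamma>" "wf_trm \<Gamma> (TApp s S')" "beta_normal (TApp s S')"
  shows "FR (pe 1 (pe (enc_env \<Gamma>) (pe (enc_trm (TApp s S')) 0)))"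
proof -
  define x where "x = pe 1 (pe (enc_env \<Gamma>) (pe (enc_trm (TApp s S')) 0))"
  have c: "c1C x = pe 1 (pe (enc_env \<Gamma>) (pe (enc_trm s) 0))" unfolding x_def by (rule c1C_TApp)
  have P: "PC (c1C x)" unfolding c by (rule PC_1I) (use wf in simp_all)
  have m: "muC (c1C x) < muC x" unfolding c unfolding x_def muC_1 by simp
  have c2: "c2C (pe x r) = c1C x" for r unfolding x_def by (rule c2C_TApp)
  have e: "fC x = hC (pe x (pe (fC (c1C x)) r))" for r
    unfolding c unfolding x_def fC_1 hC_TApp
    by (cases "synth \<Gamma> s"; simp; case_tac "expose \<Gamma> a"; simp)
  show ?thesis unfolding FR_def x_def[symmetric] c2 using P m e by blast
qed


lemma H1: "PC x \<Longrightarrow> p1 x \<noteq> 0 \<Longrightarrow> xmt x = 1 \<Longrightarrow> PL (pe (Suc (xma x)) (pe 0 (p2 (NTHB (xG x) (xma x)))))"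
proof -
  assume a: "PC x" "p1 x \<noteq> 0" "xmt x = 1"
  then obtain \<Gamma> t where x: "x = pe 1 (pe (enc_env \<Gamma>) (pe (enc_trm t) 0))" "wfE \<Gamma>" "wf_trm \<Gamma> t" using PC1 by blast
  then obtain i where t: "t = Var i" using a(3) by (cases t) auto
  then have "i < length \<Gamma>" using x by simp
  then show ?thesis using x t nth_TVarB_code[of \<Gamma> i] unfolding PL_def by auto
qed

lemma H2: "PC x \<Longrightarrow> p1 x = 0 \<Longrightarrow> p1 (xC x) = 2 \<Longrightarrow> PL (pe 1 (pe 0 (p2 (p2 (xC x)))))"
proof -
  assume a: "PC x" "p1 x = 0" "p1 (xC x) = 2"
  then obtain \<Gamma> t T where x: "x = pe 0 (pe (enc_env \<Gamma>) (pe (enc_trm t) (enc_ty T)))" using PC0 by blast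
  then obtain T1 T2 where "T = Arr T1 T2" using a(3) by (cases T) auto
  then show ?thesis using x unfolding PL_def by auto
qed

lemma H3: "PC x \<Longrightarrow> p1 x \<noteq> 0 \<Longrightarrow> \<not> dC x \<Longrightarrow> r = fC (c1C x) \<Longrightarrow> r \<noteq> 0 \<Longrightarrow> PE (pe (xG x) (r - 1))"
proof -
  assume a: "PC x" "p1 x \<noteq> 0" "\<not> dC x" "r = fC (c1C x)" "r \<noteq> 0"
  then obtain \<Gamma> s where s: "wfE \<Gamma>" "wf_trm \<Gamma> s" "xG x = enc_env \<Gamma>" "c1C x = pe 1 (pe (enc_env \<Gamma>) (pe (enc_trm s) 0))"
    using PC1_nd[OF a(1-3)] by blast
  then obtain M where M: "synth \<Gamma> s = Some M" "r = Suc (enc_ty M)" using a(4,5) s(4) by (auto simp: fC_def split: option.splits)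
  show ?thesis using synth_wf[OF s(1,2) M(1)] s M unfolding PE_def by auto
qed

lemma H4: "PC x \<Longrightarrow> p1 x = 0 \<Longrightarrow> xmt x = 2 \<Longrightarrow> p1 (xC x) = 2 \<Longrightarrow> PA (pe (xG x) (pe (p1 (p2 (xC x))) (p1 (xma x))))"
proof -
  assume a: "PC x" "p1 x = 0" "xmt x = 2" "p1 (xC x) = 2"
  then obtain \<Gamma> t T where x: "x = pe 0 (pe (enc_env \<Gamma>) (pe (enc_trm t) (enc_ty T)))" "wfE \<Gamma>" "wf_trm \<Gamma> t" "wfT \<Gamma> T"
    using PC0 by blast
  then obtain S u where t: "t = Abs S u" using a(3) by (cases t) auto
  obtain T1 T2 where T: "T = Arr T1 T2" using a(4) x by (cases T) auto
  show ?thesis using x t T unfolding PA_def by auto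
qed

lemma H5: "PC x \<Longrightarrow> p1 x = 0 \<Longrightarrow> xmt x = 3 \<Longrightarrow> p1 (xC x) = 3 \<Longrightarrow> PA (pe (xG x) (pe (p1 (p2 (xC x))) (p1 (xma x))))"
proof -
  assume a: "PC x" "p1 x = 0" "xmt x = 3" "p1 (xC x) = 3"
  then obtain \<Gamma> t T where x: "x = pe 0 (pe (enc_env \<Gamma>) (pe (enc_trm t) (enc_ty T)))" "wfE \<Gamma>" "wf_trm \<Gamma> t" "wfT \<Gamma> T"
    using PC0 by blast
  then obtain S u where t: "t = TAbs S u" using a(3) by (cases t) auto
  obtain T1 T2 where T: "T = All T1 T2" using a(4) x by (cases T) auto
  show ?thesis using x t T unfolding PA_def by auto
qed

lemma H6: "PC x \<Longrightarrow> p1 x = 0 \<Longrightarrow> xmt x \<noteq> 2 \<Longrightarrow> xmt x \<noteq> 3 \<Longrightarrow> r = fC (c1C x) \<Longrightarrow> r \<noteq> 0 \<Longrightarrow>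
    PA (pe (xG x) (pe (r - 1) (xC x)))"
proof -
  assume a: "PC x" "p1 x = 0" "xmt x \<noteq> 2" "xmt x \<noteq> 3" "r = fC (c1C x)" "r \<noteq> 0"
  then obtain \<Gamma> t T where x: "x = pe 0 (pe (enc_env \<Gamma>) (pe (enc_trm t) (enc_ty T)))" "wfE \<Gamma>" "wf_trm \<Gamma> t" "wfT \<Gamma> T"
    using PC0 by blast
  have na: "\<forall>S u. t \<noteq> Abs S u \<and> t \<noteq> TAbs S u" using a(3,4) x(1) by auto
  obtain M where M: "synth \<Gamma> t = Some M" "r = Suc (enc_ty M)"
    using a(5,6) unfolding x(1) c1C_other[OF na] fC_1 by (auto split: option.splits)
  show ?thesis using synth_wf[OF x(2,3) M(1)] x M unfolding PA_def by auto
qed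

lemma H9: "PC x \<Longrightarrow> p1 x \<noteq> 0 \<Longrightarrow> \<not> dC x \<Longrightarrow> xmt x \<noteq> 4 \<Longrightarrow> r = fC (c1C x) \<Longrightarrow> r \<noteq> 0 \<Longrightarrow>
   p1 (fE (pe (xG x) (r - 1))) = 3 \<Longrightarrow>
   PA (pe (xG x) (pe (p2 (xma x)) (p1 (p2 (fE (pe (xG x) (r - 1))))))) \<and>
   PS (pe (p2 (p2 (fE (pe (xG x) (r - 1))))) (pe 0 (p2 (xma x))))"
proof -
  assume a: "PC x" "p1 x \<noteq> 0" "\<not> dC x" "xmt x \<noteq> 4" "r = fC (c1C x)" "r \<noteq> 0" "p1 (fE (pe (xG x) (r - 1))) = 3"
  obtain \<Gamma> s where s: "wfE \<Gamma>" "wf_trm \<Gamma> s" "xG x = enc_env \<Gamma>" "c1C x = pe 1 (pe (enc_env \<Gamma>) (pe (enc_trm s) 0))"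
    and S': "\<exists>S'. wfT \<Gamma> S' \<and> x = pe 1 (pe (enc_env \<Gamma>) (pe (enc_trm (TApp s S')) 0))"
    using PC1_nd[OF a(1-3)] a(4) by auto
  obtain S' where S'': "wfT \<Gamma> S'" "x = pe 1 (pe (enc_env \<Gamma>) (pe (enc_trm (TApp s S')) 0))" using S' by blast
  obtain M where M: "synth \<Gamma> s = Some M" "r = Suc (enc_ty M)" using a(5,6) s(4) by (auto simp: fC_def split: option.splits)
  have wM: "wfT \<Gamma> M" by (rule synth_wf[OF s(1,2) M(1)])
  have fe: "fE (pe (xG x) (r - 1)) = enc_ty (expose \<Gamma> M)" using s(3) M(2) by simp
  obtain A B where AB: "expose \<Gamma> M = All A B" using a(7) fe by (cases "expose \<Gamma> M") auto
  have wA: "wfT \<Gamma> A" using expose_wf[OF s(1) wM] AB by simp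
  show ?thesis unfolding fe AB using S'' s(1,3) wA unfolding PA_def PS_def by auto
qed

lemma cc1C: "cmp (\<lambda>x. PC x \<and> \<not> dC x) c1C"
  unfolding c1C_def by (intro cmp_basic cmp_fL) (blast intro: H2)

lemma DTM_Suc0[simp]: "DT (pe (Suc 0) i) = TVar i" "DM (pe (Suc 0) i) = Var i"
  using DT_pe(2)[of i] DM_pe(2)[of i] by simp_all

lemma dC_tag: "dC x \<Longrightarrow> p1 x \<noteq> 0" by (simp add: dC_def)

lemma H9a: "PC x \<Longrightarrow> p1 x \<noteq> 0 \<Longrightarrow> \<not> dC x \<Longrightarrow> xmt x \<noteq> 4 \<Longrightarrow> r = fC (c1C x) \<Longrightarrow> r \<noteq> 0 \<Longrightarrow>
   p1 (fE (pe (xG x) (r - 1))) = 3 \<Longrightarrow> PA (pe (xG x) (pe (p2 (xma x)) (p1 (p2 (fE (pe (xG x) (r - 1)))))))"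
  using H9 by blast
lemma H9b: "PC x \<Longrightarrow> p1 x \<noteq> 0 \<Longrightarrow> \<not> dC x \<Longrightarrow> xmt x \<noteq> 4 \<Longrightarrow> r = fC (c1C x) \<Longrightarrow> r \<noteq> 0 \<Longrightarrow>
   p1 (fE (pe (xG x) (r - 1))) = 3 \<Longrightarrow> PS (pe (p2 (p2 (fE (pe (xG x) (r - 1))))) (pe 0 (p2 (xma x))))"
  using H9 by blast

lemma fb_C: "PC x \<Longrightarrow> dC x \<Longrightarrow> fC x = bC x"
proof -
  assume a: "PC x" "dC x"
  then obtain \<Gamma> t where x: "x = pe 1 (pe (enc_env \<Gamma>) (pe (enc_trm t) 0))" "wfE \<Gamma>" "wf_trm \<Gamma> t"
    using PC1 dC_tag by blast
  show ?thesis
  proof (cases t)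
    case (Var i)
    then obtain U where U: "i < length \<Gamma>" "\<Gamma> ! i = VarB U" using x is_VarB_ex by auto
    show ?thesis unfolding x(1) Var using U nth_TVarB_code[OF x(2) U(1,2)]
      by (simp add: fC_def bC_def del: enc_ty_pe; simp add: fL_def)
  qed (use a x in \<open>auto simp: fC_def bC_def dC_def\<close>)
qed

lemma fr_C: "PC x \<Longrightarrow> \<not> dC x \<Longrightarrow> FR x"
proof -
  assume a: "PC x" "\<not> dC x"
  show ?thesis
  proof (cases "p1 x = 0")
    case True
    then obtain \<Gamma> t T where x: "x = pe 0 (pe (enc_env \<Gamma>) (pe (enc_trm t) (enc_ty T)))" "wfE \<Gamma>" "wf_trm \<Gamma> t"
      "beta_normal t" "wfT \<Gamma> T" using PC0 a by blast
    show ?thesis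
    proof (cases "\<forall>S u. t \<noteq> Abs S u \<and> t \<noteq> TAbs S u")
      case True then show ?thesis unfolding x(1) by (rule fr_other[OF x(2-5)])
    next
      case False
      then obtain S u where "t = Abs S u \<or> t = TAbs S u" by blast
      then show ?thesis
      proof (elim disjE)
        assume t: "t = Abs S u" show ?thesis using fr_Abs[of \<Gamma> S u T] x t by simp
      next
        assume t: "t = TAbs S u" show ?thesis using fr_TAbs[of \<Gamma> S u T] x t by simp
      qed
    qed
  next
    case False
    then obtain \<Gamma> t where x: "x = pe 1 (pe (enc_env \<Gamma>) (pe (enc_trm t) 0))" "wfE \<Gamma>" "wf_trm \<Gamma> t" "beta_normal t"
      using PC1 a by blast
    show ?thesis
    proof (cases t)
      case (App s u) then show ?thesis using fr_App[of \<Gamma> s u] x by simp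
    next
      case (TApp s S) then show ?thesis using fr_TApp[of \<Gamma> s S] x by simp
    qed (use a x in \<open>auto simp: dC_def\<close>)
  qed
qed

interpretation C: scheme PC fC muC dC bC c1C c2C hC
proof
  show "cmp PC (\<lambda>x. of_bool (dC x))" unfolding dC_def by (intro cmp_basic)
  show "cmp (\<lambda>x. PC x \<and> dC x) bC" unfolding bC_def
    by (intro cmp_basic cmp_fL cmp_NTHB) (blast intro: H1 dest: dC_tag)
  show "cmp (\<lambda>x. PC x \<and> \<not> dC x) c1C" by (rule cc1C)
  show "cmp (\<lambda>y. PC (p1 y) \<and> \<not> dC (p1 y) \<and> p2 y = fC (c1C (p1 y))) c2C" unfolding c2C_def
    by (intro cmp_basic cmp_fE cmp_comp[OF cc1C]) (blast intro: H3)+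
  show "cmp (\<lambda>y. PC (p1 y) \<and> \<not> dC (p1 y) \<and> p1 (p2 y) = fC (c1C (p1 y)) \<and>
             p2 (p2 y) = fC (c2C (pe (p1 y) (p1 (p2 y))))) hC" unfolding hC_def
    by (intro cmp_basic cmp_fE cmp_fA cmp_fS) (blast intro: H3 H4 H5 H6 H9a H9b)+
  show "PC x \<Longrightarrow> dC x \<Longrightarrow> fC x = bC x" for x by (rule fb_C)
  show "PC x \<Longrightarrow> \<not> dC x \<Longrightarrow> PC (c1C x) \<and> muC (c1C x) < muC x \<and> PC (c2C (pe x (fC (c1C x)))) \<and>
             muC (c2C (pe x (fC (c1C x)))) < muC x \<and> fC x = hC (pe x (pe (fC (c1C x)) (fC (c2C (pe x (fC (c1C x)))))))" for x
    using fr_C[of x] unfolding FR_def by blast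
qed

theorem corollary8p6:
  "\<exists>f :: recf. \<forall>\<Gamma> t T.
     wfE \<Gamma> \<longrightarrow> wf_trm \<Gamma> t \<longrightarrow> beta_normal t \<longrightarrow> wfT \<Gamma> T \<longrightarrow>
     rec_eval f [enc_input \<Gamma> t T] (if \<Gamma> \<turnstile>\<^sub>t t : T then 1 else 0)"
proof -
  define Q where "Q y \<longleftrightarrow> (\<exists>\<Gamma> t T. y = enc_input \<Gamma> t T \<and> wfE \<Gamma> \<and> wf_trm \<Gamma> t \<and> beta_normal t \<and> wfT \<Gamma> T)" for y
  have ei: "enc_input \<Gamma> t T = pe (enc_env \<Gamma>) (pe (enc_trm t) (enc_ty T))" for \<Gamma> t T
    by (simp add: enc_input_def pe_def)
  have "cmp Q (\<lambda>y. fC (pe 0 y))"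
  proof (rule cmp_comp[OF C.computable])
    show "cmp Q (\<lambda>y. pe 0 y)" by (intro cmp_basic)
    show "Q y \<Longrightarrow> PC (pe 0 y)" for y unfolding Q_def ei by (auto intro: PC_0I)
  qed
  then obtain r where r: "\<And>y. Q y \<Longrightarrow> rec_eval r [y] (fC (pe 0 y))" unfolding cmp_def by blast
  show ?thesis
  proof (intro exI allI impI)
    fix \<Gamma> t T assume "wfE \<Gamma>" "wf_trm \<Gamma> t" "beta_normal t" "wfT \<Gamma> T"
    then have "Q (enc_input \<Gamma> t T)" unfolding Q_def by blast
    from r[OF this] show "rec_eval r [enc_input \<Gamma> t T] (if \<Gamma> \<turnstile>\<^sub>t t : T then 1 else 0)"
      unfolding ei fC_0 by (cases "\<Gamma> \<turnstile>\<^sub>t t : T") simp_all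
  qed
qed


end
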